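(* Under the hypotheses of the theorem stated in the context, let $\hat\theta^{\mathrm{all}}=\big(\sum_{i=1}^nX_i^TX_i\big)^{-1}\big(\sum_{i=1}^nX_i^Ty_i\big)$. Then for every client $i$, $$\mathbb E\|\hat\theta_i-\theta_i^*\|^2\le\min\Big\{\mathbb E\|\hat\theta^d_i-\theta_i^*\|^2,\ \mathbb E\|\hat\theta^{\mathrm{all}}-\theta_i^*\|^2\Big\},$$ with expectations over all randomness in the model.
   Context: Hierarchical linear model: clients $1,\dots,n$ are partitioned into nonempty disjoint clusters $\mathcal I_1,\dots,\mathcal I_k$. For an unknown $\bar\theta^*\in\mathbb R^d$ and known variances $\bar\sigma^2>0$, $\bar\sigma_j^2>0$, $\sigma_i^2>0$: $\bar\theta_j^*=\bar\theta^*+\bar\xi_j$ with $\bar\xi_j\sim\mathcal N(0,\bar\sigma^2I_d)$; $\theta_i^*=\bar\theta_j^*+\xi_i$ with $\xi_i\sim\mathcal N(0,\bar\sigma_j^2I_d)$ for $i\in\mathcal I_j$; $y_i=X_i\theta_i^*+\epsilon_i$ with $\epsilon_i\sim\mathcal N(0,\sigma_i^2I_{n_i})$, $X_i\in\mathbb R^{n_i\times d}$ deterministic; all noise variables mutually independent. Hypotheses: $X_i^TX_i=\beta_iI_d$ with $\beta_i>0$ for all $i$; $\hat\theta^d_i=(X_i^TX_i)^{-1}X_i^Ty_i$; $\{\hat\theta_i\}$ are the $\theta$-components of the minimizer of $\sum_{j=1}^k\big(\frac{\lambda_j}{2}\|w_j-\bar w\|^2+\sum_{i\in\mathcal I_j}(\frac{1}{2\sigma_i^2}\|y_i-X_i\theta_i\|^2+\frac{\gamma_i}{2}\|\theta_i-w_j\|^2)\big)$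 over $\theta_i,w_j,\bar w\in\mathbb R^d$, with $\lambda_j=1/\bar\sigma^2$ and $\gamma_i=1/\bar\sigma_j^2$ for $i\in\mathcal I_j$. *)

theory Defs
  imports "HOL-Probability.Probability"
begin

text \<open>Clients are indexed by i < n, clusters by j < k; the partition into
clusters is given by an assignment c, client i belonging to cluster c i.
Parameter vectors live in real^'d (d = CARD('d)). Client i's design matrix X_i has
n_i = m i rows; row r (r < m i) is the vector X i r :: real^'d.
All scalar Gaussian noise variables are collected in one family N indexed by noise_idx:
  Bar j a  : coordinate a of xibar_j (cluster noise)
  Loc i a  : coordinate a of xi_i    (client noise)
  Eps i r  : entry r of epsilon_i    (observation noise)\<close>

datatype 'd noise_idx = Bar nat 'd | Loc nat 'd | Eps nat nat

definition noise_index_set :: "nat \<Rightarrow> nat \<Rightarrow> (nat \<Rightarrow> nat) \<Rightarrow> 'd noise_idx set" where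
  "noise_index_set n k m = {Bar j a | j a. j < k} \<union> {Loc i a | i a. i < n}
      \<union> {Eps i r | i r. i < n \<and> r < m i}"

definition cluster_param :: "real^'d \<Rightarrow> ('d noise_idx \<Rightarrow> 'a \<Rightarrow> real) \<Rightarrow> nat \<Rightarrow> 'a \<Rightarrow> real^'d" where
  "cluster_param thstar N j \<omega> = thstar + (\<chi> a. N (Bar j a) \<omega>)"

definition client_param :: "real^'d \<Rightarrow> ('d noise_idx \<Rightarrow> 'a \<Rightarrow> real) \<Rightarrow> (nat \<Rightarrow> nat) \<Rightarrow> nat \<Rightarrow> 'a \<Rightarrow> real^'d" where
  "client_param thstar N c i \<omega> = cluster_param thstar N (c i) \<omega> + (\<chi> a. N (Loc i a) \<omega>)"

definition obs :: "(nat \<Rightarrow> nat \<Rightarrow> real^'d) \<Rightarrow> real^'d \<Rightarrow> ('d noise_idx \<Rightarrow> 'a \<Rightarrow> real) \<Rightarrow> (nat \<Rightarrow> nat)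
     \<Rightarrow> nat \<Rightarrow> nat \<Rightarrow> 'a \<Rightarrow> real" where
  "obs X thstar N c i r \<omega> = X i r \<bullet> client_param thstar N c i \<omega> + N (Eps i r) \<omega>"

definition gram :: "(nat \<Rightarrow> nat \<Rightarrow> real^'d) \<Rightarrow> (nat \<Rightarrow> nat) \<Rightarrow> nat \<Rightarrow> real^'d^'d" where
  "gram X m i = (\<chi> a b. \<Sum>r<m i. X i r $ a * X i r $ b)"

definition xty :: "(nat \<Rightarrow> nat \<Rightarrow> real^'d) \<Rightarrow> (nat \<Rightarrow> nat) \<Rightarrow> (nat \<Rightarrow> nat \<Rightarrow> real) \<Rightarrow> nat \<Rightarrow> real^'d" where
  "xty X m y i = (\<Sum>r<m i. y i r *\<^sub>R X i r)"

definition local_est :: "(nat \<Rightarrow> nat \<Rightarrow> real^'d) \<Rightarrow> (nat \<Rightarrow> nat) \<Rightarrow> (nat \<Rightarrow> nat \<Rightarrow> real) \<Rightarrow> nat \<Rightarrow> real^'d" where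
  "local_est X m y i = matrix_inv (gram X m i) *v xty X m y i"

definition pooled_est :: "nat \<Rightarrow> (nat \<Rightarrow> nat \<Rightarrow> real^'d) \<Rightarrow> (nat \<Rightarrow> nat) \<Rightarrow> (nat \<Rightarrow> nat \<Rightarrow> real) \<Rightarrow> real^'d" where
  "pooled_est n X m y = matrix_inv (\<Sum>i<n. gram X m i) *v (\<Sum>i<n. xty X m y i)"

text \<open>Hierarchical objective with lambda_j = 1/sbar^2 and gamma_i = 1/sc(c i)^2;
 s i is the noise standard deviation sigma_i.\<close>
definition hier_obj :: "nat \<Rightarrow> nat \<Rightarrow> (nat \<Rightarrow> nat) \<Rightarrow> (nat \<Rightarrow> nat) \<Rightarrow> (nat \<Rightarrow> nat \<Rightarrow> real^'d)
     \<Rightarrow> real \<Rightarrow> (nat \<Rightarrow> real) \<Rightarrow> (nat \<Rightarrow> real) \<Rightarrow> (nat \<Rightarrow> nat \<Rightarrow> real)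
     \<Rightarrow> (nat \<Rightarrow> real^'d) \<Rightarrow> (nat \<Rightarrow> real^'d) \<Rightarrow> real^'d \<Rightarrow> real" where
  "hier_obj n k c m X sbar sc s y \<theta> w wb =
     (\<Sum>j<k. (1 / sbar\<^sup>2) / 2 * (norm (w j - wb))\<^sup>2
        + (\<Sum>i\<in>{i. i < n \<and> c i = j}.
             1 / (2 * (s i)\<^sup>2) * (\<Sum>r<m i. (y i r - X i r \<bullet> \<theta> i)\<^sup>2)
             + (1 / (sc j)\<^sup>2) / 2 * (norm (\<theta> i - w j))\<^sup>2))"

definition hier_est :: "nat \<Rightarrow> nat \<Rightarrow> (nat \<Rightarrow> nat) \<Rightarrow> (nat \<Rightarrow> nat) \<Rightarrow> (nat \<Rightarrow> nat \<Rightarrow> real^'d)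
     \<Rightarrow> real \<Rightarrow> (nat \<Rightarrow> real) \<Rightarrow> (nat \<Rightarrow> real) \<Rightarrow> (nat \<Rightarrow> nat \<Rightarrow> real) \<Rightarrow> nat \<Rightarrow> real^'d" where
  "hier_est n k c m X sbar sc s y =
     (SOME \<theta>. \<exists>w wb. \<forall>\<theta>' w' wb'.
        hier_obj n k c m X sbar sc s y \<theta> w wb \<le> hier_obj n k c m X sbar sc s y \<theta>' w' wb')"

end

theory Submission
  imports Defs
begin


lemma (in prob_space) gauss_pair:
  fixes N :: "'i \<Rightarrow> 'a \<Rightarrow> real"
  assumes S: "S \<subseteq> I" and ind: "indep_vars (\<lambda>_. borel) N I"
    and sig: "\<And>t. t \<in> S \<Longrightarrow> \<sigma> t > 0 \<and> distributed M lborel (N t) (normal_density 0 (\<sigma> t))"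
    and st: "s \<in> S" "t \<in> S"
  shows "integrable M (\<lambda>\<omega>. N s \<omega> * N t \<omega>) \<and>
         expectation (\<lambda>\<omega>. N s \<omega> * N t \<omega>) = (if s = t then (\<sigma> t)\<^sup>2 else 0)"
proof -
  have int1: "integrable M (N u)" and E1: "expectation (N u) = 0" if "u \<in> S" for u
  proof -
    from sig[OF that] have p: "\<sigma> u > 0" and D: "distributed M lborel (N u) (normal_density 0 (\<sigma> u))" by auto
    show "integrable M (N u)"
      by (rule distributed_integrable_var[OF D]) (auto simp: normal_density_nonneg integrable_normal_moment_nz_1[OF p])
    show "expectation (N u) = 0" by (rule normal_distributed_expectation[OF p D])
  qed
  show ?thesis
  proof (cases "s = t")
    case True
    from sig[OF st(2)] have p: "\<sigma> t > 0" and D: "distributed M lborel (N t) (normal_density 0 (\<sigma> t))" by auto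
    have "integrable lborel (\<lambda>x. normal_density 0 (\<sigma> t) x * (\<lambda>x. x\<^sup>2) x)"
      using integrable_normal_moment[OF p, of 0 2] by simp
    then have i2: "integrable M (\<lambda>\<omega>. (N t \<omega>)\<^sup>2)"
      using distributed_integrable[OF D, of "\<lambda>x. x\<^sup>2"] by (simp add: normal_density_nonneg)
    have "variance (N t) = (\<sigma> t)\<^sup>2" by (rule normal_distributed_variance[OF p D])
    then have "expectation (\<lambda>\<omega>. (N t \<omega>)\<^sup>2) = (\<sigma> t)\<^sup>2" using E1[OF st(2)] by simp
    with i2 True show ?thesis by (simp add: power2_eq_square)
  next
    case False
    have ind2: "indep_vars (\<lambda>_. borel) N {s, t}" using ind S st by (auto intro: indep_vars_subset)
    have fin: "finite {s,t}" by simp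
    have "integrable M (\<lambda>\<omega>. \<Prod>i\<in>{s,t}. N i \<omega>)"
      by (rule indep_vars_integrable[OF fin ind2]) (use int1 st in auto)
    moreover have "expectation (\<lambda>\<omega>. \<Prod>i\<in>{s,t}. N i \<omega>) = (\<Prod>i\<in>{s,t}. expectation (N i))"
      by (rule indep_vars_lebesgue_integral[OF fin ind2]) (use int1 st in auto)
    ultimately show ?thesis using False E1 st by simp
  qed
qed

lemma (in prob_space) gauss_quad:
  fixes N :: "'i \<Rightarrow> 'a \<Rightarrow> real"
  assumes fin: "finite S" and S: "S \<subseteq> I" and ind: "indep_vars (\<lambda>_. borel) N I"
    and sig: "\<And>t. t \<in> S \<Longrightarrow> \<sigma> t > 0 \<and> distributed M lborel (N t) (normal_density 0 (\<sigma> t))"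
  shows "integrable M (\<lambda>\<omega>. (\<Sum>t\<in>S. a t * N t \<omega>)\<^sup>2) \<and>
    expectation (\<lambda>\<omega>. (\<Sum>t\<in>S. a t * N t \<omega>)\<^sup>2) = (\<Sum>t\<in>S. (a t)\<^sup>2 * (\<sigma> t)\<^sup>2)"
proof -
  have P: "\<And>s t. s \<in> S \<Longrightarrow> t \<in> S \<Longrightarrow> integrable M (\<lambda>\<omega>. N s \<omega> * N t \<omega>) \<and>
         expectation (\<lambda>\<omega>. N s \<omega> * N t \<omega>) = (if s = t then (\<sigma> t)\<^sup>2 else 0)"
    using gauss_pair[OF S ind sig] by blast
  have eq: "(\<lambda>\<omega>. (\<Sum>t\<in>S. a t * N t \<omega>)\<^sup>2) = (\<lambda>\<omega>. \<Sum>s\<in>S. \<Sum>t\<in>S. (a s * a t) * (N s \<omega> * N t \<omega>))"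
    by (simp add: power2_eq_square sum_product algebra_simps)
  have I: "integrable M (\<lambda>\<omega>. \<Sum>s\<in>S. \<Sum>t\<in>S. (a s * a t) * (N s \<omega> * N t \<omega>))"
    using P by (auto intro!: integrable_sum integrable_mult_right)
  have "expectation (\<lambda>\<omega>. \<Sum>s\<in>S. \<Sum>t\<in>S. (a s * a t) * (N s \<omega> * N t \<omega>))
      = (\<Sum>s\<in>S. \<Sum>t\<in>S. (a s * a t) * expectation (\<lambda>\<omega>. N s \<omega> * N t \<omega>))"
    using P by (simp add: integral_sum integrable_sum integrable_mult_right)
  also have "\<dots> = (\<Sum>s\<in>S. \<Sum>t\<in>S. (a s * a t) * (if s = t then (\<sigma> t)\<^sup>2 else 0))"
    using P by (intro sum.cong refl) simp
  also have "\<dots> = (\<Sum>t\<in>S. (a t)\<^sup>2 * (\<sigma> t)\<^sup>2)"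
    using fin by (simp add: if_distrib power2_eq_square cong: if_cong)
  finally show ?thesis using I eq by simp
qed


lemma grp_sum:
  fixes f :: "nat \<Rightarrow> nat \<Rightarrow> 'b::comm_monoid_add"
  assumes "\<forall>l<n. c l < k"
  shows "(\<Sum>j<k. \<Sum>l\<in>{l. l < n \<and> c l = j}. f l j) = (\<Sum>l<n. f l (c l))"
proof -
  have "(\<Sum>j<k. \<Sum>l\<in>{l. l < n \<and> c l = j}. f l j) = (\<Sum>j<k. \<Sum>l<n. if c l = j then f l (c l) else 0)"
  proof (rule sum.cong[OF refl])
    fix j
    have "(\<Sum>l\<in>{l. l < n \<and> c l = j}. f l j) = (\<Sum>l\<in>{l\<in>{..<n}. c l = j}. f l (c l))"
      by (intro sum.cong) auto
    also have "\<dots> = (\<Sum>l<n. if c l = j then f l (c l) else 0)"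
      by (rule sum.inter_filter) simp
    finally show "(\<Sum>l\<in>{l. l < n \<and> c l = j}. f l j) = (\<Sum>l<n. if c l = j then f l (c l) else 0)" .
  qed
  also have "\<dots> = (\<Sum>l<n. \<Sum>j<k. if c l = j then f l (c l) else 0)" by (rule sum.swap)
  also have "\<dots> = (\<Sum>l<n. f l (c l))" using assms by (intro sum.cong refl) simp
  finally show ?thesis .
qed

locale hsetup =
  fixes n k :: nat and c :: "nat \<Rightarrow> nat" and sbar :: real and sc :: "nat \<Rightarrow> real"
    and v :: "nat \<Rightarrow> real" and i :: nat
  assumes clus: "\<forall>l<n. c l < k" and nonempty: "\<forall>j<k. \<exists>l<n. c l = j"
    and sbar_pos: "sbar > 0" and sc_pos: "\<forall>j<k. sc j > 0" and v_pos: "\<forall>l<n. v l > 0"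
    and i_lt: "i < n"
begin

definition "cl j = {l. l < n \<and> c l = j}"
definition "\<kappa> l = 1 / (v l + (sc (c l))\<^sup>2)"
definition "Kc j = (\<Sum>l\<in>cl j. \<kappa> l)"
definition "\<rho> j = 1 / (1 / Kc j + sbar\<^sup>2)"
definition "R = (\<Sum>j<k. \<rho> j)"
definition "\<alpha> = (sc (c i))\<^sup>2 / (v i + (sc (c i))\<^sup>2)"
definition "\<gamma> = sbar\<^sup>2 * \<rho> (c i)"
definition "ch l = (if l = i then \<alpha> else 0) + (1 - \<alpha>) * ((if c l = c i then \<gamma> * \<kappa> l / Kc (c i) else 0)
     + (1 - \<gamma>) * \<rho> (c l) * \<kappa> l / (Kc (c l) * R))"
definition "F cc = sbar\<^sup>2 * (\<Sum>j<k. ((\<Sum>l\<in>cl j. cc l) - (if j = c i then 1 else 0))\<^sup>2)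
   + (\<Sum>l<n. (sc (c l))\<^sup>2 * (cc l - (if l = i then 1 else 0))\<^sup>2) + (\<Sum>l<n. v l * (cc l)\<^sup>2)"

lemma fin_cl: "finite (cl j)" by (simp add: cl_def)

lemma kappa_pos: "l < n \<Longrightarrow> \<kappa> l > 0"
  using v_pos clus sc_pos by (simp add: \<kappa>_def add_pos_nonneg)

lemma Kc_pos: "j < k \<Longrightarrow> Kc j > 0"
proof -
  assume j: "j < k"
  then obtain l where l: "l < n" "c l = j" using nonempty by auto
  then have "l \<in> cl j" by (simp add: cl_def)
  moreover have "\<forall>l\<in>cl j. \<kappa> l > 0" using kappa_pos by (simp add: cl_def)
  ultimately show ?thesis unfolding Kc_def using fin_cl
    by (metis empty_iff sum_pos)
qed

lemma rho_pos: "j < k \<Longrightarrow> \<rho> j > 0"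
proof -
  assume "j < k"
  then have "1 / Kc j + sbar\<^sup>2 > 0" using Kc_pos[of j] by (simp add: add_pos_nonneg)
  then show ?thesis by (simp add: \<rho>_def)
qed

lemma ci_lt: "c i < k" using clus i_lt by simp

lemma R_pos: "R > 0"
proof -
  have "c i \<in> {..<k}" using ci_lt by simp
  then show ?thesis unfolding R_def using rho_pos by (metis empty_iff finite_lessThan lessThan_iff sum_pos)
qed

lemma rho_alt: "j < k \<Longrightarrow> \<rho> j * (sbar\<^sup>2 + 1 / Kc j) = 1"
proof -
  assume "j < k"
  then have "1 / Kc j + sbar\<^sup>2 > 0" using Kc_pos[of j] by (simp add: add_pos_nonneg)
  then show ?thesis by (simp add: \<rho>_def add.commute)
qed

lemma kappa_inv: "l < n \<Longrightarrow> \<kappa> l * ((sc (c l))\<^sup>2 + v l) = 1"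
proof -
  assume "l < n"
  then have "v l + (sc (c l))\<^sup>2 > 0" using v_pos by (simp add: add_pos_nonneg)
  then show ?thesis by (simp add: \<kappa>_def add.commute)
qed

lemma gamma_eq: "\<gamma> / Kc (c i) = sbar\<^sup>2 * (1 - \<gamma>)"
proof -
  define K where "K = Kc (c i)"
  have K: "K > 0" using Kc_pos ci_lt K_def by simp
  define D where "D = 1 + sbar\<^sup>2 * K"
  have D: "D > 0" using K by (simp add: D_def add_pos_nonneg)
  have g: "\<gamma> = sbar\<^sup>2 * K / D"
    using K D by (simp add: \<gamma>_def \<rho>_def K_def[symmetric] D_def field_simps)
  have "\<gamma> / K = sbar\<^sup>2 / D" using K by (simp add: g)
  moreover have "1 - \<gamma> = 1 / D" using D by (simp add: g field_simps D_def)
  ultimately show ?thesis by (simp add: K_def)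
qed

lemma alpha_eq: "\<alpha> * ((sc (c i))\<^sup>2 + v i) = (sc (c i))\<^sup>2"
proof -
  have "v i + (sc (c i))\<^sup>2 > 0" using v_pos i_lt by (simp add: add_pos_nonneg)
  then show ?thesis by (simp add: \<alpha>_def add.commute)
qed

lemma Ch: "j < k \<Longrightarrow> (\<Sum>l\<in>cl j. ch l) = (if j = c i then \<alpha> + (1-\<alpha>)*\<gamma> else 0) + (1-\<alpha>)*(1-\<gamma>)*\<rho> j / R"
proof -
  assume j: "j < k"
  have K: "Kc j > 0" using Kc_pos j by simp
  have s1: "(\<Sum>l\<in>cl j. (if l = i then \<alpha> else 0)) = (if j = c i then \<alpha> else 0)"
    using fin_cl[of j] i_lt by (auto simp: cl_def)
  have s2: "(\<Sum>l\<in>cl j. (if c l = c i then \<gamma> * \<kappa> l / Kc (c i) else 0)) = (if j = c i then \<gamma> else 0)"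
  proof (cases "j = c i")
    case True
    have "(\<Sum>l\<in>cl j. (if c l = c i then \<gamma> * \<kappa> l / Kc (c i) else 0)) = (\<Sum>l\<in>cl j. \<gamma> / Kc j * \<kappa> l)"
      using True by (intro sum.cong refl) (auto simp: cl_def)
    also have "\<dots> = \<gamma> / Kc j * Kc j" by (simp only: sum_distrib_left[symmetric] Kc_def)
    also have "\<dots> = \<gamma>" using K by simp
    finally show ?thesis using True by simp
  next
    case False
    then have "(\<Sum>l\<in>cl j. (if c l = c i then \<gamma> * \<kappa> l / Kc (c i) else 0)) = 0"
      by (intro sum.neutral) (auto simp: cl_def)
    then show ?thesis using False by simp
  qed
  have s3: "(\<Sum>l\<in>cl j. (1 - \<gamma>) * \<rho> (c l) * \<kappa> l / (Kc (c l) * R)) = (1-\<gamma>)*\<rho> j / R"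
  proof -
    have "(\<Sum>l\<in>cl j. (1 - \<gamma>) * \<rho> (c l) * \<kappa> l / (Kc (c l) * R)) = (\<Sum>l\<in>cl j. ((1 - \<gamma>) * \<rho> j / (Kc j * R)) * \<kappa> l)"
      by (intro sum.cong refl) (auto simp: cl_def)
    also have "\<dots> = ((1 - \<gamma>) * \<rho> j / (Kc j * R)) * Kc j" by (simp only: sum_distrib_left[symmetric] Kc_def)
    also have "\<dots> = (1-\<gamma>)*\<rho> j / R" using K R_pos by simp
    finally show ?thesis .
  qed
  have "(\<Sum>l\<in>cl j. ch l) = (\<Sum>l\<in>cl j. (if l = i then \<alpha> else 0)) + (1-\<alpha>) * ((\<Sum>l\<in>cl j. (if c l = c i then \<gamma> * \<kappa> l / Kc (c i) else 0)) + (\<Sum>l\<in>cl j. (1 - \<gamma>) * \<rho> (c l) * \<kappa> l / (Kc (c l) * R)))"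
    unfolding ch_def by (simp add: sum.distrib sum_distrib_left[symmetric])
  also have "\<dots> = (if j = c i then \<alpha> + (1-\<alpha>)*\<gamma> else 0) + (1-\<alpha>)*(1-\<gamma>)*\<rho> j / R"
    unfolding s1 s2 s3 by (simp add: algebra_simps)
  finally show ?thesis .
qed

lemma sum_ch: "(\<Sum>l<n. ch l) = 1"
proof -
  have "(\<Sum>l<n. ch l) = (\<Sum>j<k. \<Sum>l\<in>cl j. ch l)"
    using grp_sum[OF clus, of "\<lambda>l j. ch l"] by (simp add: cl_def)
  also have "\<dots> = (\<Sum>j<k. (if j = c i then \<alpha> + (1-\<alpha>)*\<gamma> else 0) + (1-\<alpha>)*(1-\<gamma>)*\<rho> j / R)"
    using Ch by simp
  also have "\<dots> = (\<alpha> + (1-\<alpha>)*\<gamma>) + (1-\<alpha>)*(1-\<gamma>) * R / R"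
    using ci_lt by (simp add: sum.distrib sum_divide_distrib[symmetric] sum_distrib_left[symmetric] R_def)
  also have "\<dots> = (\<alpha> + (1-\<alpha>)*\<gamma>) + (1-\<alpha>)*(1-\<gamma>)" using R_pos by simp
  also have "\<dots> = 1" by (simp add: algebra_simps)
  finally show ?thesis .
qed

definition "\<mu> = (1-\<alpha>)*(1-\<gamma>)/R"

lemma lagrange: "l < n \<Longrightarrow> sbar\<^sup>2 * ((\<Sum>l'\<in>cl (c l). ch l') - (if c l = c i then 1 else 0))
   + (sc (c l))\<^sup>2 * (ch l - (if l = i then 1 else 0)) + v l * ch l = \<mu>"
proof -
  assume l: "l < n"
  have cl: "c l < k" using clus l by simp
  have K: "Kc (c l) > 0" using Kc_pos cl by simp
  have e1: "((sc (c l))\<^sup>2 + v l) * ch l = (if l = i then (sc (c i))\<^sup>2 else 0)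
     + (1-\<alpha>)*((if c l = c i then \<gamma> / Kc (c i) else 0) + (1-\<gamma>) * \<rho> (c l) / (Kc (c l) * R))"
  proof -
    define Z where "Z = (1-\<alpha>)*((if c l = c i then \<gamma> / Kc (c i) else 0) + (1-\<gamma>) * \<rho> (c l) / (Kc (c l) * R))"
    have "ch l = (if l = i then \<alpha> else 0) + \<kappa> l * Z" unfolding ch_def Z_def by (simp add: algebra_simps)
    then have "((sc (c l))\<^sup>2 + v l) * ch l = ((sc (c l))\<^sup>2 + v l) * (if l = i then \<alpha> else 0) + (\<kappa> l * ((sc (c l))\<^sup>2 + v l)) * Z"
      by (simp add: algebra_simps)
    also have "\<dots> = (if l = i then (sc (c i))\<^sup>2 else 0) + Z"
      using kappa_inv[OF l] alpha_eq by (simp add: mult.commute)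
    finally show ?thesis unfolding Z_def .
  qed
  have r: "\<rho> (c l) * (sbar\<^sup>2 + 1 / Kc (c l)) = 1" using rho_alt cl by simp
  have "sbar\<^sup>2 * ((\<Sum>l'\<in>cl (c l). ch l') - (if c l = c i then 1 else 0))
   + (sc (c l))\<^sup>2 * (ch l - (if l = i then 1 else 0)) + v l * ch l
   = sbar\<^sup>2 * ((if c l = c i then \<alpha> + (1-\<alpha>)*\<gamma> else 0) + (1-\<alpha>)*(1-\<gamma>)*\<rho> (c l) / R - (if c l = c i then 1 else 0))
     + ((sc (c l))\<^sup>2 + v l) * ch l - (if l = i then (sc (c i))\<^sup>2 else 0)"
    using Ch[OF cl] by (simp add: algebra_simps)
  also have "\<dots> = (if c l = c i then (1-\<alpha>) * (\<gamma> / Kc (c i) - sbar\<^sup>2 * (1 - \<gamma>)) else 0)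
      + (1-\<alpha>)*(1-\<gamma>)/R * (\<rho> (c l) * (sbar\<^sup>2 + 1 / Kc (c l)))"
    unfolding e1 using K R_pos by (auto simp: field_simps)
  also have "\<dots> = \<mu>" unfolding gamma_eq r \<mu>_def by simp
  finally show ?thesis .
qed


lemma F_min:
  assumes sc1: "(\<Sum>l<n. cc l) = 1"
  shows "F ch \<le> F cc"
proof -
  define \<delta> where "\<delta> l = cc l - ch l" for l
  have cc_eq: "\<And>l. cc l = ch l + \<delta> l" by (simp add: \<delta>_def)
  have sd: "(\<Sum>l<n. \<delta> l) = 0" using sc1 sum_ch by (simp add: \<delta>_def sum_subtractf)
  define e where "e j = (if j = c i then 1 else (0::real))" for j
  define ei where "ei l = (if l = i then 1 else (0::real))" for l
  define Ch where "Ch j = (\<Sum>l\<in>cl j. ch l)" for j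
  define Dl where "Dl j = (\<Sum>l\<in>cl j. \<delta> l)" for j
  have csum: "\<And>j. (\<Sum>l\<in>cl j. cc l) = Ch j + Dl j" by (simp add: cc_eq sum.distrib Ch_def Dl_def)
  have T1: "(\<Sum>j<k. ((\<Sum>l\<in>cl j. cc l) - e j)\<^sup>2) = (\<Sum>j<k. (Ch j - e j)\<^sup>2) + 2*(\<Sum>j<k. (Ch j - e j) * Dl j) + (\<Sum>j<k. (Dl j)\<^sup>2)"
  proof -
    have "(\<Sum>j<k. ((\<Sum>l\<in>cl j. cc l) - e j)\<^sup>2) = (\<Sum>j<k. (Ch j - e j)\<^sup>2 + 2*((Ch j - e j) * Dl j) + (Dl j)\<^sup>2)"
      by (intro sum.cong refl) (simp add: csum power2_eq_square algebra_simps)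
    also have "\<dots> = (\<Sum>j<k. (Ch j - e j)\<^sup>2) + 2*(\<Sum>j<k. (Ch j - e j) * Dl j) + (\<Sum>j<k. (Dl j)\<^sup>2)"
      by (simp add: sum.distrib sum_distrib_left)
    finally show ?thesis .
  qed
  have lin1: "(\<Sum>j<k. (Ch j - e j) * Dl j) = (\<Sum>l<n. (Ch (c l) - e (c l)) * \<delta> l)"
  proof -
    have "(\<Sum>j<k. (Ch j - e j) * Dl j) = (\<Sum>j<k. \<Sum>l\<in>{l. l < n \<and> c l = j}. (Ch j - e j) * \<delta> l)"
      by (simp add: Dl_def cl_def sum_distrib_left)
    also have "\<dots> = (\<Sum>l<n. (Ch (c l) - e (c l)) * \<delta> l)" by (rule grp_sum[OF clus])
    finally show ?thesis .
  qed
  have T2: "(\<Sum>l<n. (sc (c l))\<^sup>2 * (cc l - ei l)\<^sup>2) = (\<Sum>l<n. (sc (c l))\<^sup>2 * (ch l - ei l)\<^sup>2)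
      + 2 * (\<Sum>l<n. (sc (c l))\<^sup>2 * (ch l - ei l) * \<delta> l) + (\<Sum>l<n. (sc (c l))\<^sup>2 * (\<delta> l)\<^sup>2)"
  proof -
    have "(\<Sum>l<n. (sc (c l))\<^sup>2 * (cc l - ei l)\<^sup>2) = (\<Sum>l<n. (sc (c l))\<^sup>2 * (ch l - ei l)\<^sup>2
      + 2 * ((sc (c l))\<^sup>2 * (ch l - ei l) * \<delta> l) + (sc (c l))\<^sup>2 * (\<delta> l)\<^sup>2)"
      by (intro sum.cong refl) (simp add: cc_eq power2_eq_square algebra_simps)
    then show ?thesis by (simp add: sum.distrib sum_distrib_left)
  qed
  have T3: "(\<Sum>l<n. v l * (cc l)\<^sup>2) = (\<Sum>l<n. v l * (ch l)\<^sup>2) + 2 * (\<Sum>l<n. v l * ch l * \<delta> l) + (\<Sum>l<n. v l * (\<delta> l)\<^sup>2)"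
  proof -
    have "(\<Sum>l<n. v l * (cc l)\<^sup>2) = (\<Sum>l<n. v l * (ch l)\<^sup>2 + 2 * (v l * ch l * \<delta> l) + v l * (\<delta> l)\<^sup>2)"
      by (intro sum.cong refl) (simp add: cc_eq power2_eq_square algebra_simps)
    then show ?thesis by (simp add: sum.distrib sum_distrib_left)
  qed
  have lin: "sbar\<^sup>2 * (\<Sum>l<n. (Ch (c l) - e (c l)) * \<delta> l) + (\<Sum>l<n. (sc (c l))\<^sup>2 * (ch l - ei l) * \<delta> l) + (\<Sum>l<n. v l * ch l * \<delta> l)
     = (\<Sum>l<n. \<mu> * \<delta> l)"
  proof -
    have "sbar\<^sup>2 * (\<Sum>l<n. (Ch (c l) - e (c l)) * \<delta> l) + (\<Sum>l<n. (sc (c l))\<^sup>2 * (ch l - ei l) * \<delta> l) + (\<Sum>l<n. v l * ch l * \<delta> l)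
      = (\<Sum>l<n. (sbar\<^sup>2 * (Ch (c l) - e (c l)) + (sc (c l))\<^sup>2 * (ch l - ei l) + v l * ch l) * \<delta> l)"
    proof -
      have "(\<Sum>l<n. (sbar\<^sup>2 * (Ch (c l) - e (c l)) + (sc (c l))\<^sup>2 * (ch l - ei l) + v l * ch l) * \<delta> l)
        = (\<Sum>l<n. sbar\<^sup>2 * ((Ch (c l) - e (c l)) * \<delta> l) + (sc (c l))\<^sup>2 * (ch l - ei l) * \<delta> l + v l * ch l * \<delta> l)"
        by (intro sum.cong refl) (simp add: algebra_simps)
      also have "\<dots> = sbar\<^sup>2 * (\<Sum>l<n. (Ch (c l) - e (c l)) * \<delta> l) + (\<Sum>l<n. (sc (c l))\<^sup>2 * (ch l - ei l) * \<delta> l) + (\<Sum>l<n. v l * ch l * \<delta> l)"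
        by (simp add: sum.distrib sum_distrib_left)
      finally show ?thesis by simp
    qed
    also have "\<dots> = (\<Sum>l<n. \<mu> * \<delta> l)"
      using lagrange by (intro sum.cong refl) (simp add: Ch_def e_def ei_def)
    finally show ?thesis .
  qed
  have nn: "0 \<le> sbar\<^sup>2 * (\<Sum>j<k. (Dl j)\<^sup>2) + (\<Sum>l<n. (sc (c l))\<^sup>2 * (\<delta> l)\<^sup>2) + (\<Sum>l<n. v l * (\<delta> l)\<^sup>2)"
    using v_pos by (intro add_nonneg_nonneg mult_nonneg_nonneg sum_nonneg) auto
  have "F cc = F ch + 2 * (sbar\<^sup>2 * (\<Sum>l<n. (Ch (c l) - e (c l)) * \<delta> l) + (\<Sum>l<n. (sc (c l))\<^sup>2 * (ch l - ei l) * \<delta> l) + (\<Sum>l<n. v l * ch l * \<delta> l))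
     + (sbar\<^sup>2 * (\<Sum>j<k. (Dl j)\<^sup>2) + (\<Sum>l<n. (sc (c l))\<^sup>2 * (\<delta> l)\<^sup>2) + (\<Sum>l<n. v l * (\<delta> l)\<^sup>2))"
    unfolding F_def T1[unfolded e_def] T2[unfolded ei_def] T3 lin1[unfolded e_def]
    by (simp add: Ch_def algebra_simps e_def ei_def)
  also have "\<dots> = F ch + (sbar\<^sup>2 * (\<Sum>j<k. (Dl j)\<^sup>2) + (\<Sum>l<n. (sc (c l))\<^sup>2 * (\<delta> l)\<^sup>2) + (\<Sum>l<n. v l * (\<delta> l)\<^sup>2))"
    unfolding lin by (simp add: sum_distrib_left[symmetric] sd)
  finally show ?thesis using nn by simp
qed

end

lemma wsum_sq:
  fixes z :: "'i \<Rightarrow> 'v::real_inner"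
  assumes "finite S" "(\<Sum>t\<in>S. a t) \<noteq> 0"
  shows "(\<Sum>t\<in>S. a t * (norm (x - z t))\<^sup>2) =
     (\<Sum>t\<in>S. a t) * (norm (x - (1/(\<Sum>t\<in>S. a t)) *\<^sub>R (\<Sum>t\<in>S. a t *\<^sub>R z t)))\<^sup>2
     + (\<Sum>t\<in>S. a t * (norm ((1/(\<Sum>t\<in>S. a t)) *\<^sub>R (\<Sum>t\<in>S. a t *\<^sub>R z t) - z t))\<^sup>2)"
proof -
  define A where "A = (\<Sum>t\<in>S. a t)"
  define zb where "zb = (1/A) *\<^sub>R (\<Sum>t\<in>S. a t *\<^sub>R z t)"
  have A0: "A \<noteq> 0" using assms A_def by simp
  have "(\<Sum>t\<in>S. a t *\<^sub>R zb) = A *\<^sub>R zb" by (simp add: A_def scaleR_sum_left)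
  also have "\<dots> = (\<Sum>t\<in>S. a t *\<^sub>R z t)" using A0 by (simp add: zb_def)
  finally have key: "(\<Sum>t\<in>S. a t *\<^sub>R (zb - z t)) = 0"
    by (simp add: scaleR_right_diff_distrib sum_subtractf)
  have e: "\<And>t. (norm (x - z t))\<^sup>2 = (norm (x - zb))\<^sup>2 + 2 * inner (x - zb) (zb - z t) + (norm (zb - z t))\<^sup>2"
  proof -
    fix t
    define u where "u = x - zb"
    define u' where "u' = zb - z t"
    have "x - z t = u + u'" by (simp add: u_def u'_def)
    then have "(norm (x - z t))\<^sup>2 = inner (u + u') (u + u')" by (simp add: power2_norm_eq_inner)
    also have "\<dots> = inner u u + 2 * inner u u' + inner u' u'"
      by (simp add: inner_add_left inner_add_right inner_commute[of u' u])
    finally show "(norm (x - z t))\<^sup>2 = (norm (x - zb))\<^sup>2 + 2 * inner (x - zb) (zb - z t) + (norm (zb - z t))\<^sup>2"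
      by (simp add: power2_norm_eq_inner u_def u'_def)
  qed
  have "(\<Sum>t\<in>S. a t * (norm (x - z t))\<^sup>2) = (\<Sum>t\<in>S. a t * (norm (x - zb))\<^sup>2 + 2 * (a t * inner (x - zb) (zb - z t)) + a t * (norm (zb - z t))\<^sup>2)"
    unfolding e by (simp only: distrib_left mult.left_commute)
  also have "\<dots> = (\<Sum>t\<in>S. a t * (norm (x - zb))\<^sup>2) + 2 * inner (x - zb) (\<Sum>t\<in>S. a t *\<^sub>R (zb - z t)) + (\<Sum>t\<in>S. a t * (norm (zb - z t))\<^sup>2)"
    by (simp only: sum.distrib sum_distrib_left[symmetric] inner_sum_right inner_scaleR_right)
  also have "\<dots> = A * (norm (x - zb))\<^sup>2 + (\<Sum>t\<in>S. a t * (norm (zb - z t))\<^sup>2)"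
    by (simp add: key A_def sum_distrib_right)
  finally show ?thesis unfolding A_def zb_def .
qed

lemma two_pt:
  fixes x b w :: "'v::real_inner"
  assumes "p + q \<noteq> 0"
  shows "p * (norm (x - b))\<^sup>2 + q * (norm (x - w))\<^sup>2
    = (p+q) * (norm (x - (1/(p+q)) *\<^sub>R (p *\<^sub>R b + q *\<^sub>R w)))\<^sup>2 + (p*q/(p+q)) * (norm (w - b))\<^sup>2"
proof -
  define D where "D = p + q"
  have D0: "D \<noteq> 0" using assms D_def by simp
  define m where "m = (1/D) *\<^sub>R (p *\<^sub>R b + q *\<^sub>R w)"
  have W: "(\<Sum>t\<in>(UNIV::bool set). (if t then p else q) * (norm (x - (if t then b else w)))\<^sup>2) =
     (\<Sum>t\<in>(UNIV::bool set). (if t then p else q)) * (norm (x - (1/(\<Sum>t\<in>(UNIV::bool set). (if t then p else q))) *\<^sub>R (\<Sum>t\<in>(UNIV::bool set). (if t then p else q) *\<^sub>R (if t then b else w))))\<^sup>2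
     + (\<Sum>t\<in>(UNIV::bool set). (if t then p else q) * (norm ((1/(\<Sum>t\<in>(UNIV::bool set). (if t then p else q))) *\<^sub>R (\<Sum>t\<in>(UNIV::bool set). (if t then p else q) *\<^sub>R (if t then b else w)) - (if t then b else w)))\<^sup>2)"
    by (rule wsum_sq) (use assms in \<open>auto simp: UNIV_bool\<close>)
  have mb: "m - b = (q/D) *\<^sub>R (w - b)"
  proof -
    have "m - b = (1/D) *\<^sub>R (p *\<^sub>R b + q *\<^sub>R w - D *\<^sub>R b)" using D0 by (simp add: m_def scaleR_diff_right)
    also have "p *\<^sub>R b + q *\<^sub>R w - D *\<^sub>R b = q *\<^sub>R (w - b)" by (simp add: D_def algebra_simps)
    finally show ?thesis by simp
  qed
  have mw: "m - w = (p/D) *\<^sub>R (b - w)"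
  proof -
    have "m - w = (1/D) *\<^sub>R (p *\<^sub>R b + q *\<^sub>R w - D *\<^sub>R w)" using D0 by (simp add: m_def scaleR_diff_right)
    also have "p *\<^sub>R b + q *\<^sub>R w - D *\<^sub>R w = p *\<^sub>R (b - w)" by (simp add: D_def algebra_simps)
    finally show ?thesis by simp
  qed
  have "p * (norm (m - b))\<^sup>2 + q * (norm (m - w))\<^sup>2 = (p*(q/D)\<^sup>2 + q*(p/D)\<^sup>2) * (norm (w - b))\<^sup>2"
    unfolding mb mw by (simp only: norm_scaleR power_mult_distrib power2_abs norm_minus_commute[of b w]) (simp add: algebra_simps)
  also have "p*(q/D)\<^sup>2 + q*(p/D)\<^sup>2 = p*q/D"
  proof -
    have "p*(q/D)\<^sup>2 + q*(p/D)\<^sup>2 = (p*q) * (p+q) / (D*D)" by (simp add: power2_eq_square algebra_simps add_divide_distrib)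
    also have "\<dots> = p*q/D" using D0 by (simp add: D_def)
    finally show ?thesis .
  qed
  finally have "p * (norm (m - b))\<^sup>2 + q * (norm (m - w))\<^sup>2 = (p*q/D) * (norm (w - b))\<^sup>2" .
  then show ?thesis using W by (simp add: UNIV_bool m_def D_def add.commute)
qed

context hsetup begin

definition "pp l = 1 / v l"
definition "qq j = 1 / (sc j)\<^sup>2"
definition "rr = 1 / sbar\<^sup>2"

definition J :: "(nat \<Rightarrow> 'v::real_inner) \<Rightarrow> (nat \<Rightarrow> 'v) \<Rightarrow> (nat \<Rightarrow> 'v) \<Rightarrow> 'v \<Rightarrow> real" where
  "J b \<theta> w wb = (\<Sum>j<k. rr / 2 * (norm (w j - wb))\<^sup>2 + (\<Sum>l\<in>cl j. pp l / 2 * (norm (\<theta> l - b l))\<^sup>2 + qq j / 2 * (norm (\<theta> l - w j))\<^sup>2))"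

definition "Bc b j = (1 / Kc j) *\<^sub>R (\<Sum>l\<in>cl j. \<kappa> l *\<^sub>R b l)"
definition "Wh b = (1 / R) *\<^sub>R (\<Sum>j<k. \<rho> j *\<^sub>R Bc b j)"
definition "mw b wb j = (1 / (Kc j + rr)) *\<^sub>R (Kc j *\<^sub>R Bc b j + rr *\<^sub>R wb)"
definition "mt b w l = (1 / (pp l + qq (c l))) *\<^sub>R (pp l *\<^sub>R b l + qq (c l) *\<^sub>R w (c l))"
definition "Cb b = (\<Sum>j<k. \<Sum>l\<in>cl j. \<kappa> l / 2 * (norm (Bc b j - b l))\<^sup>2) + (\<Sum>j<k. \<rho> j / 2 * (norm (Wh b - Bc b j))\<^sup>2)"
definition "Sq b \<theta> w wb = (\<Sum>j<k. \<Sum>l\<in>cl j. (pp l + qq j) / 2 * (norm (\<theta> l - mt b w l))\<^sup>2)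
   + (\<Sum>j<k. (Kc j + rr) / 2 * (norm (w j - mw b wb j))\<^sup>2) + R / 2 * (norm (wb - Wh b))\<^sup>2"

lemma pp_pos: "l < n \<Longrightarrow> pp l > 0" using v_pos by (simp add: pp_def)
lemma qq_pos: "j < k \<Longrightarrow> qq j > 0"
proof -
  assume "j < k"
  then have "sc j > 0" using sc_pos by simp
  then show ?thesis by (simp add: qq_def)
qed
lemma rr_pos: "rr > 0" using sbar_pos by (simp add: rr_def)

lemma kappa_pq: "l < n \<Longrightarrow> pp l * qq (c l) / (pp l + qq (c l)) = \<kappa> l"
proof -
  assume l: "l < n"
  have v: "v l > 0" using v_pos l by simp
  have s: "sc (c l) > 0" using sc_pos clus l by simp
  show ?thesis using v s by (simp add: pp_def qq_def \<kappa>_def field_simps)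
qed

lemma rho_Kr: "j < k \<Longrightarrow> Kc j * rr / (Kc j + rr) = \<rho> j"
proof -
  assume j: "j < k"
  have K: "Kc j > 0" using Kc_pos j by simp
  show ?thesis using K sbar_pos by (simp add: rr_def \<rho>_def field_simps)
qed

lemma decomp: "J b \<theta> w wb = Sq b \<theta> w wb + Cb b"
proof -
  have st1: "pp l / 2 * (norm (\<theta> l - b l))\<^sup>2 + qq j / 2 * (norm (\<theta> l - w j))\<^sup>2
      = (pp l + qq j) / 2 * (norm (\<theta> l - mt b w l))\<^sup>2 + \<kappa> l / 2 * (norm (w j - b l))\<^sup>2"
    if "j < k" "l \<in> cl j" for j l
  proof -
    have l: "l < n" "c l = j" using that by (auto simp: cl_def)
    have "pp l + qq (c l) \<noteq> 0" using pp_pos qq_pos l clus by (metis add_pos_pos less_irrefl)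
    note E = two_pt[OF this, of "\<theta> l" "b l" "w (c l)", unfolded kappa_pq[OF l(1)]]
    show ?thesis using E unfolding mt_def l(2) by linarith
  qed
  have st2: "(\<Sum>l\<in>cl j. \<kappa> l / 2 * (norm (w j - b l))\<^sup>2) = Kc j / 2 * (norm (w j - Bc b j))\<^sup>2 + (\<Sum>l\<in>cl j. \<kappa> l / 2 * (norm (Bc b j - b l))\<^sup>2)"
    if "j < k" for j
  proof -
    have "Kc j \<noteq> 0" using Kc_pos[OF that] by simp
    from wsum_sq[OF fin_cl this[unfolded Kc_def], of "w j" b]
    have "(\<Sum>l\<in>cl j. \<kappa> l * (norm (w j - b l))\<^sup>2) = Kc j * (norm (w j - Bc b j))\<^sup>2 + (\<Sum>l\<in>cl j. \<kappa> l * (norm (Bc b j - b l))\<^sup>2)"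
      by (simp add: Kc_def[symmetric] Bc_def)
    then show ?thesis by (simp add: sum_divide_distrib[symmetric])
  qed
  have st3: "Kc j / 2 * (norm (w j - Bc b j))\<^sup>2 + rr / 2 * (norm (w j - wb))\<^sup>2
     = (Kc j + rr) / 2 * (norm (w j - mw b wb j))\<^sup>2 + \<rho> j / 2 * (norm (wb - Bc b j))\<^sup>2" if "j < k" for j
  proof -
    have "Kc j + rr \<noteq> 0" using Kc_pos that rr_pos by (metis add_pos_pos less_irrefl)
    note E = two_pt[OF this, of "w j" "Bc b j" wb, unfolded rho_Kr[OF that]]
    show ?thesis using E unfolding mw_def by linarith
  qed
  have st4: "(\<Sum>j<k. \<rho> j / 2 * (norm (wb - Bc b j))\<^sup>2) = R / 2 * (norm (wb - Wh b))\<^sup>2 + (\<Sum>j<k. \<rho> j / 2 * (norm (Wh b - Bc b j))\<^sup>2)"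
  proof -
    have "R \<noteq> 0" using R_pos by simp
    from wsum_sq[OF finite_lessThan this[unfolded R_def], of wb "Bc b"]
    have "(\<Sum>j<k. \<rho> j * (norm (wb - Bc b j))\<^sup>2) = R * (norm (wb - Wh b))\<^sup>2 + (\<Sum>j<k. \<rho> j * (norm (Wh b - Bc b j))\<^sup>2)"
      by (simp add: R_def[symmetric] Wh_def)
    then show ?thesis by (simp add: sum_divide_distrib[symmetric])
  qed
  have "J b \<theta> w wb = (\<Sum>j<k. rr / 2 * (norm (w j - wb))\<^sup>2 + (\<Sum>l\<in>cl j. (pp l + qq j) / 2 * (norm (\<theta> l - mt b w l))\<^sup>2 + \<kappa> l / 2 * (norm (w j - b l))\<^sup>2))"
    unfolding J_def
  proof (rule sum.cong[OF refl])
    fix j assume j: "j \<in> {..<k}"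
    have "(\<Sum>l\<in>cl j. pp l / 2 * (norm (\<theta> l - b l))\<^sup>2 + qq j / 2 * (norm (\<theta> l - w j))\<^sup>2)
      = (\<Sum>l\<in>cl j. (pp l + qq j) / 2 * (norm (\<theta> l - mt b w l))\<^sup>2 + \<kappa> l / 2 * (norm (w j - b l))\<^sup>2)"
      using j st1 by (intro sum.cong refl) simp
    then show "rr / 2 * (norm (w j - wb))\<^sup>2 + (\<Sum>l\<in>cl j. pp l / 2 * (norm (\<theta> l - b l))\<^sup>2 + qq j / 2 * (norm (\<theta> l - w j))\<^sup>2)
      = rr / 2 * (norm (w j - wb))\<^sup>2 + (\<Sum>l\<in>cl j. (pp l + qq j) / 2 * (norm (\<theta> l - mt b w l))\<^sup>2 + \<kappa> l / 2 * (norm (w j - b l))\<^sup>2)"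
      by simp
  qed
  also have "\<dots> = (\<Sum>j<k. (\<Sum>l\<in>cl j. (pp l + qq j) / 2 * (norm (\<theta> l - mt b w l))\<^sup>2) + ((Kc j + rr) / 2 * (norm (w j - mw b wb j))\<^sup>2 + \<rho> j / 2 * (norm (wb - Bc b j))\<^sup>2)
       + (\<Sum>l\<in>cl j. \<kappa> l / 2 * (norm (Bc b j - b l))\<^sup>2))"
  proof (rule sum.cong[OF refl])
    fix j assume j: "j \<in> {..<k}"
    show "rr / 2 * (norm (w j - wb))\<^sup>2 + (\<Sum>l\<in>cl j. (pp l + qq j) / 2 * (norm (\<theta> l - mt b w l))\<^sup>2 + \<kappa> l / 2 * (norm (w j - b l))\<^sup>2) =
      (\<Sum>l\<in>cl j. (pp l + qq j) / 2 * (norm (\<theta> l - mt b w l))\<^sup>2) + ((Kc j + rr) / 2 * (norm (w j - mw b wb j))\<^sup>2 + \<rho> j / 2 * (norm (wb - Bc b j))\<^sup>2)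
       + (\<Sum>l\<in>cl j. \<kappa> l / 2 * (norm (Bc b j - b l))\<^sup>2)"
    proof -
      have jk: "j < k" using j by simp
      have "(\<Sum>l\<in>cl j. (pp l + qq j) / 2 * (norm (\<theta> l - mt b w l))\<^sup>2 + \<kappa> l / 2 * (norm (w j - b l))\<^sup>2)
        = (\<Sum>l\<in>cl j. (pp l + qq j) / 2 * (norm (\<theta> l - mt b w l))\<^sup>2) + (\<Sum>l\<in>cl j. \<kappa> l / 2 * (norm (w j - b l))\<^sup>2)"
        by (rule sum.distrib)
      then show ?thesis using st2[OF jk] st3[OF jk] by linarith
    qed
  qed
  also have "\<dots> = Sq b \<theta> w wb + Cb b"
  proof -
    have "(\<Sum>j<k. (\<Sum>l\<in>cl j. (pp l + qq j) / 2 * (norm (\<theta> l - mt b w l))\<^sup>2) + ((Kc j + rr) / 2 * (norm (w j - mw b wb j))\<^sup>2 + \<rho> j / 2 * (norm (wb - Bc b j))\<^sup>2)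
       + (\<Sum>l\<in>cl j. \<kappa> l / 2 * (norm (Bc b j - b l))\<^sup>2))
      = (\<Sum>j<k. \<Sum>l\<in>cl j. (pp l + qq j) / 2 * (norm (\<theta> l - mt b w l))\<^sup>2) + ((\<Sum>j<k. (Kc j + rr) / 2 * (norm (w j - mw b wb j))\<^sup>2) + (\<Sum>j<k. \<rho> j / 2 * (norm (wb - Bc b j))\<^sup>2))
       + (\<Sum>j<k. \<Sum>l\<in>cl j. \<kappa> l / 2 * (norm (Bc b j - b l))\<^sup>2)"
      by (simp only: sum.distrib)
    then show ?thesis unfolding Sq_def Cb_def using st4 by linarith
  qed
  finally show ?thesis .
qed


definition "wh b = mw b (Wh b)"
definition "th b = mt b (wh b)"

lemma term_nn: "j < k \<Longrightarrow> l \<in> cl j \<Longrightarrow> 0 \<le> (pp l + qq j) / 2 * (norm x)\<^sup>2"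
proof -
  assume "j < k" "l \<in> cl j"
  then have "pp l + qq j > 0" using pp_pos qq_pos by (simp add: cl_def add_pos_pos)
  then show ?thesis by simp
qed

lemma term_nn2: "j < k \<Longrightarrow> 0 \<le> (Kc j + rr) / 2 * (norm x)\<^sup>2"
proof -
  assume "j < k"
  then have "Kc j + rr > 0" using Kc_pos rr_pos by (simp add: add_pos_pos)
  then show ?thesis by simp
qed

lemma Sq_parts_nonneg:
  fixes \<theta> b w :: "nat \<Rightarrow> 'v::real_inner" and wb :: 'v
  shows "0 \<le> (\<Sum>j<k. \<Sum>l\<in>cl j. (pp l + qq j) / 2 * (norm (\<theta> l - mt b w l))\<^sup>2) \<and>
    0 \<le> (\<Sum>j<k. (Kc j + rr) / 2 * (norm (w j - mw b wb j))\<^sup>2) \<and>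
    0 \<le> R / 2 * (norm (wb - Wh b))\<^sup>2"
  using term_nn term_nn2 R_pos by (auto intro!: sum_nonneg)

lemma Sq_opt: "Sq b (th b) (wh b) (Wh b) = 0"
  unfolding Sq_def th_def wh_def by simp

lemma J_opt: "J b (th b) (wh b) (Wh b) \<le> J b \<theta> w wb"
  using Sq_parts_nonneg[of \<theta> b w wb] unfolding decomp Sq_opt by (simp add: Sq_def)

lemma J_unique:
  assumes min: "J b \<theta> w wb \<le> J b (th b) (wh b) (Wh b)"
  shows "\<theta> i = th b i"
proof -
  have "Sq b \<theta> w wb \<le> 0" using min unfolding decomp Sq_opt by simp
  then have z: "Sq b \<theta> w wb = 0" using Sq_parts_nonneg[of \<theta> b w wb] by (simp add: Sq_def)
  note P = Sq_parts_nonneg[of \<theta> b w wb]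
  have z1: "(\<Sum>j<k. \<Sum>l\<in>cl j. (pp l + qq j) / 2 * (norm (\<theta> l - mt b w l))\<^sup>2) = 0"
   and z2: "(\<Sum>j<k. (Kc j + rr) / 2 * (norm (w j - mw b wb j))\<^sup>2) = 0"
   and z3: "R / 2 * (norm (wb - Wh b))\<^sup>2 = 0"
    using z P unfolding Sq_def by linarith+
  have wb: "wb = Wh b" using z3 R_pos by simp
  have ci: "c i \<in> {..<k}" using ci_lt by simp
  have "\<forall>j\<in>{..<k}. (Kc j + rr) / 2 * (norm (w j - mw b wb j))\<^sup>2 = 0"
    using z2 term_nn2 by (subst sum_nonneg_eq_0_iff[symmetric]) auto
  then have "(Kc (c i) + rr) / 2 * (norm (w (c i) - mw b wb (c i)))\<^sup>2 = 0" using ci by blast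
  moreover have "Kc (c i) + rr > 0" using Kc_pos ci_lt rr_pos by (simp add: add_pos_pos)
  ultimately have wci: "w (c i) = wh b (c i)" using wb by (simp add: wh_def)
  have inner_nn: "\<And>j. j \<in> {..<k} \<Longrightarrow> 0 \<le> (\<Sum>l\<in>cl j. (pp l + qq j) / 2 * (norm (\<theta> l - mt b w l))\<^sup>2)"
    using term_nn by (auto intro!: sum_nonneg)
  have "\<forall>j\<in>{..<k}. (\<Sum>l\<in>cl j. (pp l + qq j) / 2 * (norm (\<theta> l - mt b w l))\<^sup>2) = 0"
    using z1 inner_nn by (subst sum_nonneg_eq_0_iff[symmetric]) auto
  then have s0: "(\<Sum>l\<in>cl (c i). (pp l + qq (c i)) / 2 * (norm (\<theta> l - mt b w l))\<^sup>2) = 0" using ci by blast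
  have ii: "i \<in> cl (c i)" using i_lt by (simp add: cl_def)
  have "\<forall>l\<in>cl (c i). (pp l + qq (c i)) / 2 * (norm (\<theta> l - mt b w l))\<^sup>2 = 0"
    using s0 term_nn ci_lt fin_cl by (subst sum_nonneg_eq_0_iff[symmetric]) auto
  then have "(pp i + qq (c i)) / 2 * (norm (\<theta> i - mt b w i))\<^sup>2 = 0" using ii by blast
  moreover have "pp i + qq (c i) > 0" using pp_pos i_lt qq_pos ci_lt by (simp add: add_pos_pos)
  ultimately have "\<theta> i = mt b w i" by simp
  also have "\<dots> = th b i" using wci by (simp add: mt_def th_def)
  finally show ?thesis .
qed


lemma th_lin:
  fixes b :: "nat \<Rightarrow> 'v::real_inner"
  shows "th b i = (\<Sum>l<n. ch l *\<^sub>R b l)"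
proof -
  define K where "K = Kc (c i)"
  have K: "K > 0" using Kc_pos ci_lt K_def by simp
  have a1: "pp i / (pp i + qq (c i)) = \<alpha>" and a2: "qq (c i) / (pp i + qq (c i)) = 1 - \<alpha>"
  proof -
    have v: "v i > 0" using v_pos i_lt by simp
    have s: "sc (c i) > 0" using sc_pos ci_lt by simp
    show "pp i / (pp i + qq (c i)) = \<alpha>" using v s by (simp add: pp_def qq_def \<alpha>_def field_simps)
    have pq: "pp i + qq (c i) > 0" using v s by (simp add: pp_def qq_def add_pos_pos)
    have "qq (c i) / (pp i + qq (c i)) = 1 - pp i / (pp i + qq (c i))" using pq by (simp add: field_simps)
    also have "pp i / (pp i + qq (c i)) = \<alpha>" using v s by (simp add: pp_def qq_def \<alpha>_def field_simps)
    finally show "qq (c i) / (pp i + qq (c i)) = 1 - \<alpha>" .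
  qed
  have g1: "K / (K + rr) = \<gamma>" and g2: "rr / (K + rr) = 1 - \<gamma>"
  proof -
    show "K / (K + rr) = \<gamma>" using K sbar_pos by (simp add: rr_def \<gamma>_def \<rho>_def K_def[symmetric] field_simps)
    have Kr: "K + rr > 0" using K rr_pos by simp
    have "rr / (K + rr) = 1 - K / (K + rr)" using Kr by (simp add: field_simps)
    also have "K / (K + rr) = \<gamma>" using K sbar_pos by (simp add: rr_def \<gamma>_def \<rho>_def K_def[symmetric] field_simps)
    finally show "rr / (K + rr) = 1 - \<gamma>" .
  qed
  have th1: "th b i = \<alpha> *\<^sub>R b i + (1 - \<alpha>) *\<^sub>R wh b (c i)"
  proof -
    have "th b i = (pp i / (pp i + qq (c i))) *\<^sub>R b i + (qq (c i) / (pp i + qq (c i))) *\<^sub>R wh b (c i)"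
      unfolding th_def mt_def by (simp add: scaleR_add_right scaleR_scaleR)
    then show ?thesis unfolding a1 a2 .
  qed
  have wh1: "wh b (c i) = \<gamma> *\<^sub>R Bc b (c i) + (1 - \<gamma>) *\<^sub>R Wh b"
  proof -
    have "wh b (c i) = (K / (K + rr)) *\<^sub>R Bc b (c i) + (rr / (K + rr)) *\<^sub>R Wh b"
      unfolding wh_def mw_def K_def[symmetric] by (simp add: scaleR_add_right scaleR_scaleR)
    then show ?thesis unfolding g1 g2 .
  qed
  have B1: "Bc b (c i) = (\<Sum>l<n. (if c l = c i then \<kappa> l / K else 0) *\<^sub>R b l)"
  proof -
    have "Bc b (c i) = (\<Sum>l\<in>{l\<in>{..<n}. c l = c i}. (\<kappa> l / K) *\<^sub>R b l)"
      unfolding Bc_def K_def[symmetric] cl_def by (simp add: scaleR_sum_right)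
    also have "\<dots> = (\<Sum>l<n. (if c l = c i then \<kappa> l / K else 0) *\<^sub>R b l)"
      by (subst sum.inter_filter) (auto intro!: sum.cong)
    finally show ?thesis .
  qed
  have W1: "Wh b = (\<Sum>l<n. (\<rho> (c l) * \<kappa> l / (Kc (c l) * R)) *\<^sub>R b l)"
  proof -
    have "Wh b = (\<Sum>j<k. \<Sum>l\<in>{l. l < n \<and> c l = j}. (\<rho> j * \<kappa> l / (Kc j * R)) *\<^sub>R b l)"
      unfolding Wh_def Bc_def cl_def by (simp add: scaleR_sum_right mult.commute)
    also have "\<dots> = (\<Sum>l<n. (\<rho> (c l) * \<kappa> l / (Kc (c l) * R)) *\<^sub>R b l)"
      by (rule grp_sum[OF clus])
    finally show ?thesis .
  qed
  define f2 where "f2 l = (if c l = c i then \<kappa> l / K else 0)" for l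
  define f3 where "f3 l = \<rho> (c l) * \<kappa> l / (Kc (c l) * R)" for l
  have s1: "(\<Sum>l<n. (if l = i then \<alpha> else 0) *\<^sub>R b l) = \<alpha> *\<^sub>R b i"
  proof -
    have "(\<Sum>l<n. (if l = i then \<alpha> else 0) *\<^sub>R b l) = (\<Sum>l<n. if l = i then \<alpha> *\<^sub>R b l else 0)"
      by (intro sum.cong) auto
    then show ?thesis using i_lt by simp
  qed
  have "th b i = \<alpha> *\<^sub>R b i + (1 - \<alpha>) *\<^sub>R (\<gamma> *\<^sub>R (\<Sum>l<n. f2 l *\<^sub>R b l) + (1 - \<gamma>) *\<^sub>R (\<Sum>l<n. f3 l *\<^sub>R b l))"
    unfolding th1 wh1 B1 W1 f2_def f3_def ..
  also have "\<dots> = \<alpha> *\<^sub>R b i + (1 - \<alpha>) *\<^sub>R \<gamma> *\<^sub>R (\<Sum>l<n. f2 l *\<^sub>R b l) + (1 - \<alpha>) *\<^sub>R (1 - \<gamma>) *\<^sub>R (\<Sum>l<n. f3 l *\<^sub>R b l)"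
    by (simp only: scaleR_add_right add.assoc)
  also have "\<dots> = (\<Sum>l<n. (if l = i then \<alpha> else 0) *\<^sub>R b l) + (\<Sum>l<n. (1 - \<alpha>) *\<^sub>R \<gamma> *\<^sub>R f2 l *\<^sub>R b l) + (\<Sum>l<n. (1 - \<alpha>) *\<^sub>R (1 - \<gamma>) *\<^sub>R f3 l *\<^sub>R b l)"
    by (simp only: s1 scaleR_sum_right)
  also have "\<dots> = (\<Sum>l<n. (if l = i then \<alpha> else 0) *\<^sub>R b l + (1 - \<alpha>) *\<^sub>R \<gamma> *\<^sub>R f2 l *\<^sub>R b l + (1 - \<alpha>) *\<^sub>R (1 - \<gamma>) *\<^sub>R f3 l *\<^sub>R b l)"
    by (simp only: sum.distrib)
  also have "\<dots> = (\<Sum>l<n. ch l *\<^sub>R b l)"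
  proof (rule sum.cong[OF refl])
    fix l
    have "ch l = (if l = i then \<alpha> else 0) + (1 - \<alpha>) * \<gamma> * f2 l + (1 - \<alpha>) * (1 - \<gamma>) * f3 l"
      using K by (cases "c l = c i") (simp_all add: ch_def f2_def f3_def K_def[symmetric] field_simps)
    then show "(if l = i then \<alpha> else 0) *\<^sub>R b l + (1 - \<alpha>) *\<^sub>R \<gamma> *\<^sub>R f2 l *\<^sub>R b l + (1 - \<alpha>) *\<^sub>R (1 - \<gamma>) *\<^sub>R f3 l *\<^sub>R b l = ch l *\<^sub>R b l"
      by (simp only: scaleR_add_left scaleR_scaleR mult.assoc)
  qed
  finally show ?thesis .
qed

end


lemma ifmult: "(if P then a else 0) * (z::real) = (if P then a * z else 0)" by simp

lemma mat_vec_real: "(mat a :: real^'n^'n) *v y = a *\<^sub>R y"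
  by (simp add: vec_eq_iff matrix_vector_mult_def mat_def ifmult)

lemma mat_mul_mat: "(mat a :: real^'n^'n) ** mat b = mat (a * b)"
  by (simp add: vec_eq_iff matrix_matrix_mult_def mat_def ifmult)

lemma inv_mat_vec:
  assumes "a \<noteq> 0"
  shows "matrix_inv (mat a :: real^'n^'n) *v y = (1/a) *\<^sub>R y"
proof -
  have ex: "\<exists>A'::real^'n^'n. mat a ** A' = mat 1 \<and> A' ** mat a = mat 1"
    by (rule exI[of _ "mat (1/a)"]) (simp add: mat_mul_mat assms)
  have "matrix_inv (mat a :: real^'n^'n) ** mat a = mat 1"
    unfolding matrix_inv_def using someI_ex[OF ex] by blast
  moreover have "y = mat a *v ((1/a) *\<^sub>R y)" using assms by (simp add: mat_vec_real)
  ultimately have "matrix_inv (mat a :: real^'n^'n) *v y = mat 1 *v ((1/a) *\<^sub>R y)"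
    by (metis matrix_vector_mul_assoc)
  then show ?thesis by simp
qed

lemma gram_mul:
  assumes "gram X m l = mat b"
  shows "(\<Sum>r<m l. (X l r \<bullet> \<theta>) *\<^sub>R X l r) = b *\<^sub>R (\<theta> :: real^'d)"
proof (subst vec_eq_iff, intro allI)
  fix a
  have "(\<Sum>r<m l. (X l r \<bullet> \<theta>) *\<^sub>R X l r) $ a = (\<Sum>r<m l. \<Sum>b'\<in>UNIV. \<theta> $ b' * (X l r $ a * X l r $ b'))"
    by (simp add: inner_vec_def sum_distrib_left mult_ac)
  also have "\<dots> = (\<Sum>b'\<in>UNIV. \<theta> $ b' * (\<Sum>r<m l. X l r $ a * X l r $ b'))"
    by (subst sum.swap) (simp add: sum_distrib_left)
  also have "\<dots> = (\<Sum>b'\<in>UNIV. \<theta> $ b' * (gram X m l $ a $ b'))"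
    by (simp add: gram_def)
  also have "\<dots> = b * \<theta> $ a" by (simp add: assms mat_def if_distrib cong: if_cong)
  finally show "(\<Sum>r<m l. (X l r \<bullet> \<theta>) *\<^sub>R X l r) $ a = (b *\<^sub>R \<theta>) $ a" by simp
qed

lemma dataterm:
  fixes \<theta> :: "real^'d"
  assumes g: "gram X m l = mat b" and b: "b > 0"
  shows "(\<Sum>r<m l. (yl r - X l r \<bullet> \<theta>)\<^sup>2) = b * (norm (\<theta> - (1/b) *\<^sub>R (\<Sum>r<m l. yl r *\<^sub>R X l r)))\<^sup>2
     + ((\<Sum>r<m l. (yl r)\<^sup>2) - (norm (\<Sum>r<m l. yl r *\<^sub>R X l r))\<^sup>2 / b)"
proof -
  define gg where "gg = (\<Sum>r<m l. yl r *\<^sub>R X l r)"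
  have q: "(\<Sum>r<m l. (X l r \<bullet> \<theta>)\<^sup>2) = b * (\<theta> \<bullet> \<theta>)"
  proof -
    have "(\<Sum>r<m l. (X l r \<bullet> \<theta>)\<^sup>2) = \<theta> \<bullet> (\<Sum>r<m l. (X l r \<bullet> \<theta>) *\<^sub>R X l r)"
      by (simp add: inner_sum_right power2_eq_square inner_commute)
    then show ?thesis using gram_mul[OF g] by simp
  qed
  have lin: "(\<Sum>r<m l. yl r * (X l r \<bullet> \<theta>)) = \<theta> \<bullet> gg"
    by (simp add: gg_def inner_sum_right inner_commute)
  have "(\<Sum>r<m l. (yl r - X l r \<bullet> \<theta>)\<^sup>2) = (\<Sum>r<m l. (yl r)\<^sup>2) - 2 * (\<Sum>r<m l. yl r * (X l r \<bullet> \<theta>)) + (\<Sum>r<m l. (X l r \<bullet> \<theta>)\<^sup>2)"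
    by (simp add: power2_diff sum.distrib sum_subtractf sum_distrib_left mult_ac)
  also have "\<dots> = (\<Sum>r<m l. (yl r)\<^sup>2) - 2 * (\<theta> \<bullet> gg) + b * (\<theta> \<bullet> \<theta>)" unfolding lin q ..
  also have "\<dots> = b * (norm (\<theta> - (1/b) *\<^sub>R gg))\<^sup>2 + ((\<Sum>r<m l. (yl r)\<^sup>2) - (norm gg)\<^sup>2 / b)"
    using b by (simp add: power2_norm_eq_inner inner_diff_left inner_diff_right inner_commute field_simps)
  finally show ?thesis unfolding gg_def .
qed

definition Sa :: "nat \<Rightarrow> nat \<Rightarrow> (nat \<Rightarrow> nat) \<Rightarrow> 'd \<Rightarrow> 'd noise_idx set" where
  "Sa k n m a = (\<lambda>j. Bar j a) ` {..<k} \<union> (\<lambda>l. Loc l a) ` {..<n} \<union> (\<lambda>(l,r). Eps l r) ` (SIGMA l:{..<n}. {..<m l})"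

lemma Sa_finite: "finite (Sa k n m a)" by (simp add: Sa_def)

lemma Sa_sub: "Sa k n m a \<subseteq> noise_index_set n k m"
  by (auto simp: Sa_def noise_index_set_def)

lemma split_Sa: "(\<Sum>t\<in>Sa k n m a. f t) = (\<Sum>j<k. f (Bar j a)) + (\<Sum>l<n. f (Loc l a)) + (\<Sum>l<n. \<Sum>r<m l. f (Eps l r))"
proof -
  have i1: "inj_on (\<lambda>j. Bar j a) {..<k}" by (auto simp: inj_on_def)
  have i2: "inj_on (\<lambda>l. Loc l a) {..<n}" by (auto simp: inj_on_def)
  have i3: "inj_on (\<lambda>(l,r). Eps l r) (SIGMA l:{..<n}. {..<m l})" by (auto simp: inj_on_def)
  have "(\<Sum>t\<in>Sa k n m a. f t) = (\<Sum>t\<in>(\<lambda>j. Bar j a) ` {..<k}. f t) + (\<Sum>t\<in>(\<lambda>l. Loc l a) ` {..<n}. f t) + (\<Sum>t\<in>(\<lambda>(l,r). Eps l r) ` (SIGMA l:{..<n}. {..<m l}). f t)"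
    unfolding Sa_def by (subst sum.union_disjoint; auto simp: sum.union_disjoint)+
  also have "(\<Sum>t\<in>(\<lambda>(l,r). Eps l r) ` (SIGMA l:{..<n}. {..<m l}). f t) = (\<Sum>(l,r)\<in>(SIGMA l:{..<n}. {..<m l}). f (Eps l r))"
    by (rule sum.reindex_cong[OF i3 refl]) auto
  also have "(\<Sum>t\<in>(\<lambda>j. Bar j a) ` {..<k}. f t) = (\<Sum>j<k. f (Bar j a))"
    by (rule sum.reindex_cong[OF i1 refl]) auto
  also have "(\<Sum>t\<in>(\<lambda>l. Loc l a) ` {..<n}. f t) = (\<Sum>l<n. f (Loc l a))"
    by (rule sum.reindex_cong[OF i2 refl]) auto
  also have "(\<Sum>(l,r)\<in>(SIGMA l:{..<n}. {..<m l}). f (Eps l r)) = (\<Sum>l<n. \<Sum>r<m l. f (Eps l r))"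
    by (rule sum.Sigma[symmetric]) auto
  finally show ?thesis .
qed


lemma err_formula:
  fixes M :: "'a measure" and X :: "nat \<Rightarrow> nat \<Rightarrow> real^'d" and N :: "'d noise_idx \<Rightarrow> 'a \<Rightarrow> real"
    and cc :: "nat \<Rightarrow> real" and \<beta> :: "nat \<Rightarrow> real"
  assumes P: "prob_space M"
    and clus: "\<forall>i<n. c i < k"
    and sbar_pos: "sbar > 0" and sc_pos: "\<forall>j<k. sc j > 0" and s_pos: "\<forall>i<n. s i > 0"
    and indep: "prob_space.indep_vars M (\<lambda>_. borel) N (noise_index_set n k m)"
    and dist_bar: "\<forall>j<k. \<forall>a. distributed M lborel (N (Bar j a)) (normal_density 0 sbar)"
    and dist_loc: "\<forall>i<n. \<forall>a. distributed M lborel (N (Loc i a)) (normal_density 0 (sc (c i)))"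
    and dist_eps: "\<forall>i<n. \<forall>r<m i. distributed M lborel (N (Eps i r)) (normal_density 0 (s i))"
    and gram_eq: "\<forall>i<n. gram X m i = mat (\<beta> i) \<and> \<beta> i > 0"
    and i_lt: "i < n" and sc1: "(\<Sum>l<n. cc l) = 1"
  shows "prob_space.expectation M (\<lambda>\<omega>. (norm ((\<Sum>l<n. cc l *\<^sub>R ((1 / \<beta> l) *\<^sub>R xty X m (\<lambda>i r. obs X thstar N c i r \<omega>) l)) - client_param thstar N c i \<omega>))\<^sup>2)
    = real CARD('d) * (sbar\<^sup>2 * (\<Sum>j<k. ((\<Sum>l\<in>{l. l < n \<and> c l = j}. cc l) - (if j = c i then 1 else 0))\<^sup>2)
       + (\<Sum>l<n. (sc (c l))\<^sup>2 * (cc l - (if l = i then 1 else 0))\<^sup>2) + (\<Sum>l<n. (s l)\<^sup>2 / \<beta> l * (cc l)\<^sup>2))"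
proof -
  interpret prob_space M by fact
  have ci: "c i < k" using clus i_lt by simp
  define A where "A j = (\<Sum>l\<in>{l. l < n \<and> c l = j}. cc l) - (if j = c i then 1 else (0::real))" for j
  define B where "B l = cc l - (if l = i then 1 else (0::real))" for l
  define C where "C a l r = cc l * X l r $ a / \<beta> l" for a l r
  define coef where "coef (a::'d) (t::'d noise_idx) = (case t of Bar j a' \<Rightarrow> A j | Loc l a' \<Rightarrow> B l | Eps l r \<Rightarrow> C a l r)" for a t
  define \<sigma> where "\<sigma> (t::'d noise_idx) = (case t of Bar j a' \<Rightarrow> sbar | Loc l a' \<Rightarrow> sc (c l) | Eps l r \<Rightarrow> s l)" for t
  define V where "V \<omega> = (\<Sum>l<n. cc l *\<^sub>R ((1 / \<beta> l) *\<^sub>R xty X m (\<lambda>i r. obs X thstar N c i r \<omega>) l)) - client_param thstar N c i \<omega>" for \<omega>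
  have bl: "(1 / \<beta> l) *\<^sub>R xty X m (\<lambda>i r. obs X thstar N c i r \<omega>) l = client_param thstar N c l \<omega> + (\<Sum>r<m l. (N (Eps l r) \<omega> / \<beta> l) *\<^sub>R X l r)"
    if "l < n" for l \<omega>
  proof -
    have g: "gram X m l = mat (\<beta> l)" and bp: "\<beta> l > 0" using gram_eq that by auto
    have "xty X m (\<lambda>i r. obs X thstar N c i r \<omega>) l = (\<Sum>r<m l. (X l r \<bullet> client_param thstar N c l \<omega>) *\<^sub>R X l r) + (\<Sum>r<m l. N (Eps l r) \<omega> *\<^sub>R X l r)"
      by (simp add: xty_def obs_def scaleR_add_left sum.distrib)
    also have "\<dots> = \<beta> l *\<^sub>R client_param thstar N c l \<omega> + (\<Sum>r<m l. N (Eps l r) \<omega> *\<^sub>R X l r)"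
      unfolding gram_mul[OF g] ..
    finally show ?thesis using bp by (simp add: scaleR_add_right scaleR_sum_right divide_inverse mult.commute)
  qed
  have Va: "V \<omega> $ a = (\<Sum>t\<in>Sa k n m a. coef a t * N t \<omega>)" for \<omega> a
  proof -
    have "V \<omega> $ a = (\<Sum>l<n. cc l * (thstar $ a + N (Bar (c l) a) \<omega> + N (Loc l a) \<omega> + (\<Sum>r<m l. N (Eps l r) \<omega> / \<beta> l * X l r $ a)))
        - (thstar $ a + N (Bar (c i) a) \<omega> + N (Loc i a) \<omega>)"
    proof -
      have "(\<Sum>l<n. cc l *\<^sub>R ((1 / \<beta> l) *\<^sub>R xty X m (\<lambda>i r. obs X thstar N c i r \<omega>) l))
          = (\<Sum>l<n. cc l *\<^sub>R (client_param thstar N c l \<omega> + (\<Sum>r<m l. (N (Eps l r) \<omega> / \<beta> l) *\<^sub>R X l r)))"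
        using bl by (intro sum.cong refl) auto
      then show ?thesis unfolding V_def by (simp add: client_param_def cluster_param_def)
    qed
    also have "\<dots> = (\<Sum>j<k. A j * N (Bar j a) \<omega>) + (\<Sum>l<n. B l * N (Loc l a) \<omega>) + (\<Sum>l<n. \<Sum>r<m l. C a l r * N (Eps l r) \<omega>)"
    proof -
      have e1: "(\<Sum>j<k. A j * N (Bar j a) \<omega>) = (\<Sum>l<n. cc l * N (Bar (c l) a) \<omega>) - N (Bar (c i) a) \<omega>"
      proof -
        have "(\<Sum>j<k. A j * N (Bar j a) \<omega>) = (\<Sum>j<k. \<Sum>l\<in>{l. l < n \<and> c l = j}. cc l * N (Bar j a) \<omega>) - (\<Sum>j<k. if j = c i then N (Bar j a) \<omega> else 0)"
          by (simp add: A_def left_diff_distrib sum_subtractf sum_distrib_right if_distrib[of "\<lambda>x. x * _"] cong: if_cong)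
        also have "\<dots> = (\<Sum>l<n. cc l * N (Bar (c l) a) \<omega>) - N (Bar (c i) a) \<omega>"
          using ci by (simp add: grp_sum[OF clus, of "\<lambda>l j. cc l * N (Bar j a) \<omega>"])
        finally show ?thesis .
      qed
      have e2: "(\<Sum>l<n. B l * N (Loc l a) \<omega>) = (\<Sum>l<n. cc l * N (Loc l a) \<omega>) - N (Loc i a) \<omega>"
        using i_lt by (simp add: B_def left_diff_distrib sum_subtractf if_distrib[of "\<lambda>x. x * _"] cong: if_cong)
      have e3: "(\<Sum>l<n. \<Sum>r<m l. C a l r * N (Eps l r) \<omega>) = (\<Sum>l<n. cc l * (\<Sum>r<m l. N (Eps l r) \<omega> / \<beta> l * X l r $ a))"
        by (simp add: C_def sum_distrib_left mult_ac)
      have e4: "(\<Sum>l<n. cc l * thstar $ a) = thstar $ a" using sc1 by (simp add: sum_distrib_right[symmetric])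
      have ex: "(\<Sum>l<n. cc l * (thstar $ a + N (Bar (c l) a) \<omega> + N (Loc l a) \<omega> + (\<Sum>r<m l. N (Eps l r) \<omega> / \<beta> l * X l r $ a)))
         = (\<Sum>l<n. cc l * thstar $ a) + (\<Sum>l<n. cc l * N (Bar (c l) a) \<omega>) + (\<Sum>l<n. cc l * N (Loc l a) \<omega>) + (\<Sum>l<n. cc l * (\<Sum>r<m l. N (Eps l r) \<omega> / \<beta> l * X l r $ a))"
        by (simp only: distrib_left sum.distrib)
      show ?thesis unfolding e1 e2 e3 using ex e4 by linarith
    qed
    also have "\<dots> = (\<Sum>t\<in>Sa k n m a. coef a t * N t \<omega>)"
      by (simp add: split_Sa coef_def)
    finally show ?thesis .
  qed
  have sig: "\<And>t. t \<in> Sa k n m a \<Longrightarrow> \<sigma> t > 0 \<and> distributed M lborel (N t) (normal_density 0 (\<sigma> t))" for a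
    using dist_bar dist_loc dist_eps sbar_pos sc_pos s_pos clus by (auto simp: Sa_def \<sigma>_def)
  have GQ: "integrable M (\<lambda>\<omega>. (\<Sum>t\<in>Sa k n m a. coef a t * N t \<omega>)\<^sup>2) \<and>
    expectation (\<lambda>\<omega>. (\<Sum>t\<in>Sa k n m a. coef a t * N t \<omega>)\<^sup>2) = (\<Sum>t\<in>Sa k n m a. (coef a t)\<^sup>2 * (\<sigma> t)\<^sup>2)" for a
    by (rule gauss_quad[OF Sa_finite Sa_sub indep sig])
  have nrm: "(norm (V \<omega>))\<^sup>2 = (\<Sum>a\<in>UNIV. (\<Sum>t\<in>Sa k n m a. coef a t * N t \<omega>)\<^sup>2)" for \<omega>
    unfolding power2_norm_eq_inner inner_vec_def Va by (simp add: power2_eq_square)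
  have "expectation (\<lambda>\<omega>. (norm (V \<omega>))\<^sup>2) = (\<Sum>a\<in>UNIV. expectation (\<lambda>\<omega>. (\<Sum>t\<in>Sa k n m a. coef a t * N t \<omega>)\<^sup>2))"
    unfolding nrm by (rule Bochner_Integration.integral_sum[where f="\<lambda>a \<omega>. (\<Sum>t\<in>Sa k n m a. coef a t * N t \<omega>)\<^sup>2"]) (use GQ in blast)
  also have "\<dots> = (\<Sum>a\<in>UNIV. (\<Sum>t\<in>Sa k n m a. (coef a t)\<^sup>2 * (\<sigma> t)\<^sup>2))" using GQ by simp
  also have "\<dots> = (\<Sum>a\<in>(UNIV::'d set). (\<Sum>j<k. (A j)\<^sup>2 * sbar\<^sup>2) + (\<Sum>l<n. (B l)\<^sup>2 * (sc (c l))\<^sup>2) + (\<Sum>l<n. \<Sum>r<m l. (C a l r)\<^sup>2 * (s l)\<^sup>2))"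
    by (simp add: split_Sa coef_def \<sigma>_def)
  also have "\<dots> = real CARD('d) * ((\<Sum>j<k. (A j)\<^sup>2 * sbar\<^sup>2) + (\<Sum>l<n. (B l)\<^sup>2 * (sc (c l))\<^sup>2)) + (\<Sum>l<n. \<Sum>a\<in>(UNIV::'d set). \<Sum>r<m l. (C a l r)\<^sup>2 * (s l)\<^sup>2)"
  proof -
    have "(\<Sum>a\<in>(UNIV::'d set). (\<Sum>j<k. (A j)\<^sup>2 * sbar\<^sup>2) + (\<Sum>l<n. (B l)\<^sup>2 * (sc (c l))\<^sup>2) + (\<Sum>l<n. \<Sum>r<m l. (C a l r)\<^sup>2 * (s l)\<^sup>2))
      = real CARD('d) * (\<Sum>j<k. (A j)\<^sup>2 * sbar\<^sup>2) + real CARD('d) * (\<Sum>l<n. (B l)\<^sup>2 * (sc (c l))\<^sup>2) + (\<Sum>a\<in>(UNIV::'d set). \<Sum>l<n. \<Sum>r<m l. (C a l r)\<^sup>2 * (s l)\<^sup>2)"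
      by (simp only: sum.distrib sum_constant of_nat_id)
    also have "(\<Sum>a\<in>(UNIV::'d set). \<Sum>l<n. \<Sum>r<m l. (C a l r)\<^sup>2 * (s l)\<^sup>2) = (\<Sum>l<n. \<Sum>a\<in>(UNIV::'d set). \<Sum>r<m l. (C a l r)\<^sup>2 * (s l)\<^sup>2)"
      by (rule sum.swap)
    finally show ?thesis by (simp only: distrib_left)
  qed
  also have "(\<Sum>l<n. \<Sum>a\<in>(UNIV::'d set). \<Sum>r<m l. (C a l r)\<^sup>2 * (s l)\<^sup>2) = (\<Sum>l<n. real CARD('d) * ((s l)\<^sup>2 / \<beta> l * (cc l)\<^sup>2))"
  proof (rule sum.cong[OF refl])
    fix l assume l: "l \<in> {..<n}"
    have g: "gram X m l = mat (\<beta> l)" and bp: "\<beta> l > 0" using gram_eq l by auto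
    have "(\<Sum>a\<in>(UNIV::'d set). \<Sum>r<m l. (X l r $ a)\<^sup>2) = (\<Sum>a\<in>(UNIV::'d set). gram X m l $ a $ a)"
      by (simp add: gram_def power2_eq_square)
    also have "\<dots> = real CARD('d) * \<beta> l" by (simp add: g mat_def)
    finally have gs: "(\<Sum>a\<in>(UNIV::'d set). \<Sum>r<m l. (X l r $ a)\<^sup>2) = real CARD('d) * \<beta> l" .
    have "(\<Sum>a\<in>(UNIV::'d set). \<Sum>r<m l. (C a l r)\<^sup>2 * (s l)\<^sup>2) = ((cc l)\<^sup>2 * (s l)\<^sup>2 / (\<beta> l)\<^sup>2) * (\<Sum>a\<in>(UNIV::'d set). \<Sum>r<m l. (X l r $ a)\<^sup>2)"
      by (simp add: C_def sum_distrib_left sum_divide_distrib power_divide power_mult_distrib mult_ac)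
    also have "\<dots> = real CARD('d) * ((s l)\<^sup>2 / \<beta> l * (cc l)\<^sup>2)"
      unfolding gs using bp by (simp add: power2_eq_square field_simps)
    finally show "(\<Sum>a\<in>(UNIV::'d set). \<Sum>r<m l. (C a l r)\<^sup>2 * (s l)\<^sup>2) = real CARD('d) * ((s l)\<^sup>2 / \<beta> l * (cc l)\<^sup>2)" .
  qed
  also have "real CARD('d) * ((\<Sum>j<k. (A j)\<^sup>2 * sbar\<^sup>2) + (\<Sum>l<n. (B l)\<^sup>2 * (sc (c l))\<^sup>2)) + (\<Sum>l<n. real CARD('d) * ((s l)\<^sup>2 / \<beta> l * (cc l)\<^sup>2))
     = real CARD('d) * (sbar\<^sup>2 * (\<Sum>j<k. ((\<Sum>l\<in>{l. l < n \<and> c l = j}. cc l) - (if j = c i then 1 else 0))\<^sup>2)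
       + (\<Sum>l<n. (sc (c l))\<^sup>2 * (cc l - (if l = i then 1 else 0))\<^sup>2) + (\<Sum>l<n. (s l)\<^sup>2 / \<beta> l * (cc l)\<^sup>2))"
  proof -
    have P: "(\<Sum>j<k. (A j)\<^sup>2 * sbar\<^sup>2) = sbar\<^sup>2 * (\<Sum>j<k. ((\<Sum>l\<in>{l. l < n \<and> c l = j}. cc l) - (if j = c i then 1 else 0))\<^sup>2)"
      by (simp add: A_def sum_distrib_left mult.commute)
    have Q: "(\<Sum>l<n. (B l)\<^sup>2 * (sc (c l))\<^sup>2) = (\<Sum>l<n. (sc (c l))\<^sup>2 * (cc l - (if l = i then 1 else 0))\<^sup>2)"
      by (simp add: B_def mult.commute)
    have R: "(\<Sum>l<n. real CARD('d) * ((s l)\<^sup>2 / \<beta> l * (cc l)\<^sup>2)) = real CARD('d) * (\<Sum>l<n. (s l)\<^sup>2 / \<beta> l * (cc l)\<^sup>2)"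
      by (simp only: sum_distrib_left)
    show ?thesis unfolding P Q R by (simp only: distrib_left)
  qed
  finally show ?thesis unfolding V_def .
qed


lemma arith1:
  fixes s b Nn E :: real
  assumes "s > 0" "b > 0"
  shows "1 / (2 * s\<^sup>2) * (b * Nn + E) = b / s\<^sup>2 / 2 * Nn + 1 / (2 * s\<^sup>2) * E"
  using assms by (simp add: field_simps)

theorem mainTheorem12:
  fixes M :: "'a measure"
    and n k :: nat
    and c :: "nat \<Rightarrow> nat"
    and m :: "nat \<Rightarrow> nat"
    and X :: "nat \<Rightarrow> nat \<Rightarrow> real^'d"
    and \<beta> :: "nat \<Rightarrow> real"
    and thstar :: "real^'d"
    and sbar :: real and sc :: "nat \<Rightarrow> real" and s :: "nat \<Rightarrow> real"
    and N :: "'d noise_idx \<Rightarrow> 'a \<Rightarrow> real"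
    and i :: nat
  assumes "prob_space M"
    and clus: "\<forall>i<n. c i < k"
    and nonempty: "\<forall>j<k. \<exists>i<n. c i = j"
    and sbar_pos: "sbar > 0" and sc_pos: "\<forall>j<k. sc j > 0" and s_pos: "\<forall>i<n. s i > 0"
    and indep: "prob_space.indep_vars M (\<lambda>_. borel) N (noise_index_set n k m)"
    and dist_bar: "\<forall>j<k. \<forall>a. distributed M lborel (N (Bar j a)) (normal_density 0 sbar)"
    and dist_loc: "\<forall>i<n. \<forall>a. distributed M lborel (N (Loc i a)) (normal_density 0 (sc (c i)))"
    and dist_eps: "\<forall>i<n. \<forall>r<m i. distributed M lborel (N (Eps i r)) (normal_density 0 (s i))"
    and gram_eq: "\<forall>i<n. gram X m i = mat (\<beta> i) \<and> \<beta> i > 0"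
    and i_lt: "i < n"
  shows "(let y = (\<lambda>\<omega> i r. obs X thstar N c i r \<omega>);
              err = (\<lambda>est. prob_space.expectation M
                        (\<lambda>\<omega>. (norm (est \<omega> - client_param thstar N c i \<omega>))\<^sup>2))
          in err (\<lambda>\<omega>. hier_est n k c m X sbar sc s (y \<omega>) i)
             \<le> min (err (\<lambda>\<omega>. local_est X m (y \<omega>) i)) (err (\<lambda>\<omega>. pooled_est n X m (y \<omega>))))"
proof -
  interpret P: prob_space M by fact
  define v where "v l = (s l)\<^sup>2 / \<beta> l" for l
  have v_pos: "\<forall>l<n. v l > 0" using s_pos gram_eq by (auto simp: v_def)
  interpret H: hsetup n k c sbar sc v i
    by unfold_locales (use clus nonempty sbar_pos sc_pos v_pos i_lt in auto)
  define yy where "yy = (\<lambda>\<omega> i r. obs X thstar N c i r \<omega>)"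
  define bb where "bb \<omega> l = (1 / \<beta> l) *\<^sub>R xty X m (yy \<omega>) l" for \<omega> l
  define err where "err est = P.expectation (\<lambda>\<omega>. (norm (est \<omega> - client_param thstar N c i \<omega>))\<^sup>2)" for est
  have EF: "err (\<lambda>\<omega>. \<Sum>l<n. cc l *\<^sub>R bb \<omega> l) = real CARD('d) * H.F cc" if "(\<Sum>l<n. cc l) = 1" for cc
    unfolding err_def bb_def yy_def H.F_def H.cl_def v_def
    by (rule err_formula[OF assms(1) clus sbar_pos sc_pos s_pos indep dist_bar dist_loc dist_eps gram_eq i_lt that])
  have hier: "hier_est n k c m X sbar sc s (yy \<omega>) i = (\<Sum>l<n. H.ch l *\<^sub>R bb \<omega> l)" for \<omega>
  proof -
    define D where "D l = 1 / (2 * (s l)\<^sup>2) * ((\<Sum>r<m l. (yy \<omega> l r)\<^sup>2) - (norm (xty X m (yy \<omega>) l))\<^sup>2 / \<beta> l)" for l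
    define Cst where "Cst = (\<Sum>j<k. \<Sum>l\<in>H.cl j. D l)"
    have dt: "1 / (2 * (s l)\<^sup>2) * (\<Sum>r<m l. (yy \<omega> l r - X l r \<bullet> \<theta> l)\<^sup>2) = H.pp l / 2 * (norm (\<theta> l - bb \<omega> l))\<^sup>2 + D l"
      if "l < n" for l and \<theta> :: "nat \<Rightarrow> real^'d"
    proof -
      have g: "gram X m l = mat (\<beta> l)" and bp: "\<beta> l > 0" and sp: "s l > 0" using gram_eq s_pos that by auto
      have "(\<Sum>r<m l. (yy \<omega> l r - X l r \<bullet> \<theta> l)\<^sup>2) = \<beta> l * (norm (\<theta> l - bb \<omega> l))\<^sup>2
          + ((\<Sum>r<m l. (yy \<omega> l r)\<^sup>2) - (norm (xty X m (yy \<omega>) l))\<^sup>2 / \<beta> l)"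
        unfolding bb_def xty_def by (rule dataterm[OF g bp])
      moreover have "H.pp l = \<beta> l / (s l)\<^sup>2" by (simp add: H.pp_def v_def)
      ultimately show ?thesis unfolding D_def using arith1[OF sp bp] by simp
    qed
    have objeq: "hier_obj n k c m X sbar sc s (yy \<omega>) \<theta> w wb = H.J (bb \<omega>) \<theta> w wb + Cst" for \<theta> w wb
    proof -
      have "hier_obj n k c m X sbar sc s (yy \<omega>) \<theta> w wb = (\<Sum>j<k. H.rr / 2 * (norm (w j - wb))\<^sup>2
          + (\<Sum>l\<in>H.cl j. (H.pp l / 2 * (norm (\<theta> l - bb \<omega> l))\<^sup>2 + H.qq j / 2 * (norm (\<theta> l - w j))\<^sup>2) + D l))"
        unfolding hier_obj_def
      proof (rule sum.cong[OF refl])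
        fix j assume j: "j \<in> {..<k}"
        have "(\<Sum>i\<in>{i. i < n \<and> c i = j}. 1 / (2 * (s i)\<^sup>2) * (\<Sum>r<m i. (yy \<omega> i r - X i r \<bullet> \<theta> i)\<^sup>2) + 1 / (sc j)\<^sup>2 / 2 * (norm (\<theta> i - w j))\<^sup>2)
          = (\<Sum>l\<in>H.cl j. (H.pp l / 2 * (norm (\<theta> l - bb \<omega> l))\<^sup>2 + H.qq j / 2 * (norm (\<theta> l - w j))\<^sup>2) + D l)"
        proof (rule sum.cong)
          show "{i. i < n \<and> c i = j} = H.cl j" by (simp add: H.cl_def)
        next
          fix l assume "l \<in> H.cl j"
          then have l: "l < n" by (simp add: H.cl_def)
          show "1 / (2 * (s l)\<^sup>2) * (\<Sum>r<m l. (yy \<omega> l r - X l r \<bullet> \<theta> l)\<^sup>2) + 1 / (sc j)\<^sup>2 / 2 * (norm (\<theta> l - w j))\<^sup>2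
            = (H.pp l / 2 * (norm (\<theta> l - bb \<omega> l))\<^sup>2 + H.qq j / 2 * (norm (\<theta> l - w j))\<^sup>2) + D l"
            unfolding H.qq_def using dt[OF l, of \<theta>] by linarith
        qed
        then show "1 / sbar\<^sup>2 / 2 * (norm (w j - wb))\<^sup>2 + (\<Sum>i\<in>{i. i < n \<and> c i = j}. 1 / (2 * (s i)\<^sup>2) * (\<Sum>r<m i. (yy \<omega> i r - X i r \<bullet> \<theta> i)\<^sup>2) + 1 / (sc j)\<^sup>2 / 2 * (norm (\<theta> i - w j))\<^sup>2)
          = H.rr / 2 * (norm (w j - wb))\<^sup>2 + (\<Sum>l\<in>H.cl j. (H.pp l / 2 * (norm (\<theta> l - bb \<omega> l))\<^sup>2 + H.qq j / 2 * (norm (\<theta> l - w j))\<^sup>2) + D l)"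
          by (simp add: H.rr_def)
      qed
      also have "\<dots> = H.J (bb \<omega>) \<theta> w wb + Cst"
        unfolding H.J_def Cst_def by (simp add: sum.distrib algebra_simps)
      finally show ?thesis .
    qed
    have ex: "\<exists>\<theta>. \<exists>w wb. \<forall>\<theta>' w' wb'. hier_obj n k c m X sbar sc s (yy \<omega>) \<theta> w wb \<le> hier_obj n k c m X sbar sc s (yy \<omega>) \<theta>' w' wb'"
      by (rule exI[of _ "H.th (bb \<omega>)"], rule exI[of _ "H.wh (bb \<omega>)"], rule exI[of _ "H.Wh (bb \<omega>)"])
         (simp add: objeq H.J_opt)
    have "\<exists>w wb. \<forall>\<theta>' w' wb'. hier_obj n k c m X sbar sc s (yy \<omega>) (hier_est n k c m X sbar sc s (yy \<omega>)) w wb \<le> hier_obj n k c m X sbar sc s (yy \<omega>) \<theta>' w' wb'"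
      unfolding hier_est_def by (rule someI_ex[OF ex])
    then obtain w wb where mn: "\<forall>\<theta>' w' wb'. hier_obj n k c m X sbar sc s (yy \<omega>) (hier_est n k c m X sbar sc s (yy \<omega>)) w wb \<le> hier_obj n k c m X sbar sc s (yy \<omega>) \<theta>' w' wb'"
      by (elim exE)
    have "H.J (bb \<omega>) (hier_est n k c m X sbar sc s (yy \<omega>)) w wb \<le> H.J (bb \<omega>) (H.th (bb \<omega>)) (H.wh (bb \<omega>)) (H.Wh (bb \<omega>))"
      using mn[rule_format, of "H.th (bb \<omega>)" "H.wh (bb \<omega>)" "H.Wh (bb \<omega>)"] unfolding objeq by simp
    then have "hier_est n k c m X sbar sc s (yy \<omega>) i = H.th (bb \<omega>) i" by (rule H.J_unique)
    then show ?thesis by (simp add: H.th_lin)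
  qed
  have loc: "local_est X m (yy \<omega>) i = (\<Sum>l<n. (if l = i then 1 else 0) *\<^sub>R bb \<omega> l)" for \<omega>
  proof -
    have g: "gram X m i = mat (\<beta> i)" and bp: "\<beta> i > 0" using gram_eq i_lt by auto
    have "local_est X m (yy \<omega>) i = bb \<omega> i"
      unfolding local_est_def bb_def g using bp by (simp add: inv_mat_vec)
    also have "\<dots> = (\<Sum>l<n. if l = i then bb \<omega> l else 0)" using i_lt by simp
    also have "\<dots> = (\<Sum>l<n. (if l = i then 1 else 0) *\<^sub>R bb \<omega> l)" by (intro sum.cong) auto
    finally show ?thesis .
  qed
  define Bs where "Bs = (\<Sum>l<n. \<beta> l)"
  have Bs: "Bs > 0"
  proof -
    have "i \<in> {..<n}" using i_lt by simp
    then show ?thesis unfolding Bs_def using gram_eq by (metis empty_iff finite_lessThan lessThan_iff sum_pos)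
  qed
  have pool: "pooled_est n X m (yy \<omega>) = (\<Sum>l<n. (\<beta> l / Bs) *\<^sub>R bb \<omega> l)" for \<omega>
  proof -
    have gs: "(\<Sum>l<n. gram X m l) = mat Bs"
    proof -
      have "(\<Sum>l<n. gram X m l) = (\<Sum>l<n. mat (\<beta> l))" using gram_eq by (intro sum.cong) auto
      also have "\<dots> = mat Bs" unfolding Bs_def by (auto simp: vec_eq_iff mat_def)
      finally show ?thesis .
    qed
    have xs: "(\<Sum>l<n. xty X m (yy \<omega>) l) = (\<Sum>l<n. \<beta> l *\<^sub>R bb \<omega> l)"
      using gram_eq by (intro sum.cong) (auto simp: bb_def)
    show ?thesis unfolding pooled_est_def gs xs using Bs
      by (simp add: inv_mat_vec scaleR_sum_right)
  qed
  have sp: "(\<Sum>l<n. \<beta> l / Bs) = 1" using Bs by (simp add: sum_divide_distrib[symmetric] Bs_def)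
  have si: "(\<Sum>l<n. (if l = i then 1 else 0::real)) = 1" using i_lt by simp
  have e1: "err (\<lambda>\<omega>. hier_est n k c m X sbar sc s (yy \<omega>) i) = real CARD('d) * H.F H.ch"
    unfolding hier by (rule EF[OF H.sum_ch])
  have e2: "err (\<lambda>\<omega>. local_est X m (yy \<omega>) i) = real CARD('d) * H.F (\<lambda>l. if l = i then 1 else 0)"
    unfolding loc by (rule EF[OF si])
  have e3: "err (\<lambda>\<omega>. pooled_est n X m (yy \<omega>)) = real CARD('d) * H.F (\<lambda>l. \<beta> l / Bs)"
    unfolding pool by (rule EF[OF sp])
  have "err (\<lambda>\<omega>. hier_est n k c m X sbar sc s (yy \<omega>) i) \<le> min (err (\<lambda>\<omega>. local_est X m (yy \<omega>) i)) (err (\<lambda>\<omega>. pooled_est n X m (yy \<omega>)))"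
    unfolding e1 e2 e3 using H.F_min[OF si] H.F_min[OF sp] by (simp add: mult_left_mono)
  then show ?thesis unfolding Let_def err_def yy_def .
qed


end
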